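(* The ordered $(n-1)$-complex $\mathfrak X=\bigcup_{\alpha\in\mathfrak I}\mathfrak X_\alpha\subset\mathbb R^{n-1}$ is a $\Lambda$-complex for $\Lambda:=\mathbb Z^r\times N_1\mathbb Z\times\cdots\times N_{r_2}\mathbb Z$. Moreover: (i) $\mathrm{Vt}(\mathfrak X_\alpha)\subset\mathbb Z^{n-1}$ for all $\alpha$; (ii) $|\mathfrak I|=(n-1)!\prod_{j=1}^{r_2}N_j$; (iii) for every $1\le j\le r_2$ and $\alpha\in\mathfrak I$ there is $\alpha_j\in\mathbb R$ such that $\alpha_j\le\Omega_j(\kappa)\le\alpha_j+1$ for all $\kappa\in\mathfrak X_\alpha$, where $$\Omega_j(\kappa):=\kappa[r+j]+\frac{N_j}{2\pi}\sum_{\ell=1}^r\kappa[\ell]\arg(\varepsilon_\ell^{(r_1+j)}),\qquad\kappa=(\kappa[1],\dots,\kappa[n-1]).$$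
   Context: Number field setup: $k$ is a number field of degree $n=r_1+2r_2$ with real embeddings $\tau_1,\dots,\tau_{r_1}$ and complex embeddings $\tau_{r_1+1},\dots,\tau_{r_1+r_2}$ (one from each conjugate pair); $\gamma^{(i)}:=\tau_i(\gamma)$. Let $r=r_1+r_2-1$, let $\varepsilon_1,\dots,\varepsilon_r$ be multiplicatively independent totally positive units of $k$, and fix integers $N_j\ge 3$ ($1\le j\le r_2$). $\arg$ takes values in $(-\pi,\pi]$. Ordered complexes: an ordered $p$-complex in a $p$-dimensional real vector space $V$ is a family $X=\bigcup_{\alpha\in\mathfrak I}X_\alpha$ of $p$-simplices $X_\alpha\subset V$ (vertex set $\mathrm{Vt}(X_\alpha)$), each with a total order $\prec_\alpha$ on $\mathrm{Vt}(X_\alpha)$; $[s_1,\dots,s_t]$ denotes a convex hull. For $x$ in a simplex $S$, $\mathrm{SpVt}(x)$ is the set of vertices of $S$ with positive barycentric coordinate in $x$. $\Lambda$-complex: $X$ is a $\Lambda$-complex if (i) for all $\alpha,\beta$, $X_\alpha\cap X_\beta$ is empty or equals the convex hull of $\mathrm{Vt}(X_\alpha)\cap\mathrm{Vt}(X_\beta)$; (ii) for $v,w\in\mathrm{Vt}(X_\alpha)\cap\mathrm{Vt}(X_\beta)$, $v\prec_\alpha w\iff v\prec_\beta w$; (iii) if $v,w\in\mathrm{Vt}(X_\alpha)$, $\lambda\in\Lambda$ and $v+\lambda,w+\lambda\in\mathrm{Vt}(X_{\alpha'})$, then $v\prec_\alpha w\iff v+\lambda\prec_{\alpha'}w+\lambda$;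 (iv) the quotient map $V\to V/\Lambda$ restricted to $X$ is surjective and is injective on the union of the interiors of the $X_\alpha$; (v) if $x,x'\in X$, $\lambda\in\Lambda$, $x'=x+\lambda$, then $\mathrm{SpVt}(x')=\mathrm{SpVt}(x)+\lambda$. Construction $Y(X,\omega,[M_1,M_2])$: given an ordered $p$-complex $X$, linear $\omega:V\to\mathbb R$, integers $M_1<M_2$: let $A:V\to(0,1]$ with $A(u)-\omega(u)\in\mathbb Z$, $a(u):=A(u)-\omega(u)$; order $\prec_\alpha^A$: $u\prec_\alpha^A u'$ iff $A(u)<A(u')$, or $A(u)=A(u')$ and $u\prec_\alpha u'$. $J=\{(\alpha,v,\ell):v\in\mathrm{Vt}(X_\alpha),\ \ell\in\mathbb Z,\ M_1\le\ell<M_2\}$; for $\gamma=(\alpha,v,\ell)$, list $\mathrm{Vt}(X_\alpha)$ as $v_0\prec_\alpha^A\cdots\prec_\alpha^Av_p$, $v=v_j$, and $Y_\gamma=[v_0\times(a(v_0)+\ell),\dots,v_j\times(a(v_j)+\ell),v_j\times(a(v_j)+\ell-1),\dots,v_p\times(a(v_p)+\ell-1)]$, ordered by $\rho\prec_\gamma\rho'$ iff $\pi_V(\rho)\prec_\alpha\pi_V(\rho')$, or $\pi_V(\rho)=\pi_V(\rho')$ and $\pi_{\mathbb R}(\rho')<\pi_{\mathbb R}(\rho)$. $Y(X,\omega,[M_1,M_2])=\bigcup_{\gamma\in J}Y_\gamma$. The complex $\mathfrak X$: $X_0=\{0\}\subset\mathbb R^0$ (one simplex, one vertex). For $1\le j\le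 r$, $X_j=Y(X_{j-1},0,[0,1])\subset\mathbb R^j$. For $1\le j\le r_2$, $X_{r+j}=Y(X_{r+j-1},\omega_{r+j-1},[0,N_j])$ with $\omega_{r+j-1}(x)=\frac{N_j}{2\pi}\sum_{\ell=1}^r x[\ell]\arg(\varepsilon_\ell^{(r_1+j)})$. $\mathfrak X=\bigcup_{\alpha\in\mathfrak I}\mathfrak X_\alpha:=X_{n-1}\subset\mathbb R^{n-1}$. *)

theory Defs
  imports "HOL-Analysis.Analysis"
begin

text \<open>Points of R^p are represented as functions nat => real that vanish at all
  indices >= p (coordinate x[i] of the paper is x (i-1)).  An ordered simplex is a
  list of its vertices, listed in increasing order of its vertex order; an ordered
  complex is a list of ordered simplices (the index set is the set of list positions).\<close>

type_synonym pt = "nat \<Rightarrow> real"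

definition in_space :: "nat \<Rightarrow> pt \<Rightarrow> bool" where
  "in_space p x \<longleftrightarrow> (\<forall>i\<ge>p. x i = 0)"

definition padd :: "pt \<Rightarrow> pt \<Rightarrow> pt" where
  "padd x y = (\<lambda>i. x i + y i)"

definition psub :: "pt \<Rightarrow> pt \<Rightarrow> pt" where
  "psub x y = (\<lambda>i. x i - y i)"

definition comb :: "(pt \<Rightarrow> real) \<Rightarrow> pt set \<Rightarrow> pt" where
  "comb c S = (\<lambda>i. \<Sum>v\<in>S. c v * v i)"

definition chull :: "pt set \<Rightarrow> pt set" where
  "chull S = {x. \<exists>c. (\<forall>v\<in>S. 0 \<le> c v) \<and> sum c S = 1 \<and> x = comb c S}"

definition open_simplex :: "pt set \<Rightarrow> pt set" where
  "open_simplex S = {x. \<exists>c. (\<forall>v\<in>S. 0 < c v) \<and> sum c S = 1 \<and> x = comb c S}"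

definition aff_indep :: "pt set \<Rightarrow> bool" where
  "aff_indep S \<longleftrightarrow> (\<forall>c. sum c S = 0 \<and> comb c S = (\<lambda>_. 0) \<longrightarrow> (\<forall>v\<in>S. c v = 0))"

definition SpVt :: "pt list \<Rightarrow> pt \<Rightarrow> pt set" where
  "SpVt \<alpha> x = {v \<in> set \<alpha>. \<exists>c. (\<forall>u\<in>set \<alpha>. 0 \<le> c u) \<and> sum c (set \<alpha>) = 1
                              \<and> x = comb c (set \<alpha>) \<and> 0 < c v}"

definition pos :: "'a list \<Rightarrow> 'a \<Rightarrow> nat" where
  "pos xs x = length (takeWhile (\<lambda>y. y \<noteq> x) xs)"

definition prec :: "pt list \<Rightarrow> pt \<Rightarrow> pt \<Rightarrow> bool" where
  "prec \<alpha> v w \<longleftrightarrow> pos \<alpha> v < pos \<alpha> w"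

definition ordered_complex :: "nat \<Rightarrow> pt list list \<Rightarrow> bool" where
  "ordered_complex p X \<longleftrightarrow>
     (\<forall>\<alpha>\<in>set X. distinct \<alpha> \<and> length \<alpha> = p + 1 \<and> (\<forall>v\<in>set \<alpha>. in_space p v)
                 \<and> aff_indep (set \<alpha>))"

definition Lambda_complex :: "nat \<Rightarrow> (pt \<Rightarrow> bool) \<Rightarrow> pt list list \<Rightarrow> bool" where
  "Lambda_complex p Lam X \<longleftrightarrow>
     ordered_complex p X \<and>
     \<comment> \<open>(i)\<close>
     (\<forall>\<alpha>\<in>set X. \<forall>\<beta>\<in>set X. chull (set \<alpha>) \<inter> chull (set \<beta>) = {} \<or>
          chull (set \<alpha>) \<inter> chull (set \<beta>) = chull (set \<alpha> \<inter> set \<beta>)) \<and>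
     \<comment> \<open>(ii)\<close>
     (\<forall>\<alpha>\<in>set X. \<forall>\<beta>\<in>set X. \<forall>v\<in>set \<alpha> \<inter> set \<beta>. \<forall>w\<in>set \<alpha> \<inter> set \<beta>.
          prec \<alpha> v w \<longleftrightarrow> prec \<beta> v w) \<and>
     \<comment> \<open>(iii)\<close>
     (\<forall>\<alpha>\<in>set X. \<forall>\<alpha>'\<in>set X. \<forall>v\<in>set \<alpha>. \<forall>w\<in>set \<alpha>. \<forall>t. Lam t \<longrightarrow>
          padd v t \<in> set \<alpha>' \<longrightarrow> padd w t \<in> set \<alpha>' \<longrightarrow>
          (prec \<alpha> v w \<longleftrightarrow> prec \<alpha>' (padd v t) (padd w t))) \<and>
     \<comment> \<open>(iv) surjectivity of V -> V/Lambda on X\<close>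
     (\<forall>y. in_space p y \<longrightarrow> (\<exists>\<alpha>\<in>set X. \<exists>x\<in>chull (set \<alpha>). Lam (psub y x))) \<and>
     \<comment> \<open>(iv) injectivity on the union of the interiors\<close>
     (\<forall>\<alpha>\<in>set X. \<forall>\<beta>\<in>set X. \<forall>x\<in>open_simplex (set \<alpha>). \<forall>y\<in>open_simplex (set \<beta>).
          Lam (psub x y) \<longrightarrow> x = y) \<and>
     \<comment> \<open>(v)\<close>
     (\<forall>\<alpha>\<in>set X. \<forall>\<alpha>'\<in>set X. \<forall>x\<in>chull (set \<alpha>). \<forall>x'\<in>chull (set \<alpha>'). \<forall>t.
          Lam t \<longrightarrow> x' = padd x t \<longrightarrow> SpVt \<alpha>' x' = (\<lambda>v. padd v t) ` SpVt \<alpha> x)"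

text \<open>The construction Y(X, omega, [M1,M2]) for an ordered p-complex X (new coordinate has index p).\<close>
definition Afun :: "(pt \<Rightarrow> real) \<Rightarrow> pt \<Rightarrow> real" where
  "Afun \<omega> u = \<omega> u - of_int \<lceil>\<omega> u\<rceil> + 1"   \<comment> \<open>the unique value in (0,1] congruent to omega u mod Z\<close>

definition afun :: "(pt \<Rightarrow> real) \<Rightarrow> pt \<Rightarrow> real" where
  "afun \<omega> u = Afun \<omega> u - \<omega> u"

definition precA :: "(pt \<Rightarrow> real) \<Rightarrow> pt list \<Rightarrow> pt \<Rightarrow> pt \<Rightarrow> bool" where
  "precA \<omega> \<alpha> u u' \<longleftrightarrow> Afun \<omega> u < Afun \<omega> u' \<or> (Afun \<omega> u = Afun \<omega> u' \<and> prec \<alpha> u u')"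

definition rankA :: "(pt \<Rightarrow> real) \<Rightarrow> pt list \<Rightarrow> pt \<Rightarrow> nat" where
  "rankA \<omega> \<alpha> u = card {w \<in> set \<alpha>. precA \<omega> \<alpha> w u}"

definition ext :: "nat \<Rightarrow> pt \<Rightarrow> real \<Rightarrow> pt" where
  "ext p x t = x(p := t)"

text \<open>Y_gamma for gamma = (alpha, v, l), listed in the order \<prec>_gamma\<close>
definition Ysimp :: "nat \<Rightarrow> (pt \<Rightarrow> real) \<Rightarrow> pt list \<Rightarrow> pt \<Rightarrow> int \<Rightarrow> pt list" where
  "Ysimp p \<omega> \<alpha> v l =
     concat (map (\<lambda>u.
        (if rankA \<omega> \<alpha> u \<le> rankA \<omega> \<alpha> v then [ext p u (afun \<omega> u + of_int l)] else []) @
        (if rankA \<omega> \<alpha> v \<le> rankA \<omega> \<alpha> u then [ext p u (afun \<omega> u + of_int l - 1)] else [])) \<alpha>)"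

definition Ycx :: "nat \<Rightarrow> pt list list \<Rightarrow> (pt \<Rightarrow> real) \<Rightarrow> int \<Rightarrow> int \<Rightarrow> pt list list" where
  "Ycx p X \<omega> M1 M2 =
     concat (map (\<lambda>\<alpha>. concat (map (\<lambda>v. map (\<lambda>l. Ysimp p \<omega> \<alpha> v l) [M1..M2 - 1]) \<alpha>)) X)"

text \<open>e l j stands for eps_l^(r1+j) (1 \<le> l \<le> r, 1 \<le> j \<le> r2).\<close>
definition omega_fn :: "nat \<Rightarrow> (nat \<Rightarrow> nat) \<Rightarrow> (nat \<Rightarrow> nat \<Rightarrow> complex) \<Rightarrow> nat \<Rightarrow> pt \<Rightarrow> real" where
  "omega_fn r N e j x = real (N j) / (2 * pi) * (\<Sum>l=1..r. x (l - 1) * Arg (e l j))"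

fun Xc :: "nat \<Rightarrow> (nat \<Rightarrow> nat) \<Rightarrow> (nat \<Rightarrow> nat \<Rightarrow> complex) \<Rightarrow> nat \<Rightarrow> pt list list" where
  "Xc r N e 0 = [[(\<lambda>_. 0)]]"
| "Xc r N e (Suc j) =
     (if j < r then Ycx j (Xc r N e j) (\<lambda>_. 0) 0 1
      else Ycx j (Xc r N e j) (omega_fn r N e (j - r + 1)) 0 (int (N (j - r + 1))))"

definition Xfrak :: "nat \<Rightarrow> nat \<Rightarrow> (nat \<Rightarrow> nat) \<Rightarrow> (nat \<Rightarrow> nat \<Rightarrow> complex) \<Rightarrow> pt list list" where
  "Xfrak r1 r2 N e = Xc (r1 + r2 - 1) N e (r1 + 2 * r2 - 1)"

definition LamK :: "nat \<Rightarrow> nat \<Rightarrow> (nat \<Rightarrow> nat) \<Rightarrow> pt \<Rightarrow> bool" where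
  "LamK r r2 N x \<longleftrightarrow> (\<forall>i<r. x i \<in> \<int>) \<and>
      (\<forall>j\<in>{1..r2}. \<exists>m::int. x (r + j - 1) = real (N j) * of_int m) \<and>
      (\<forall>i\<ge>r + r2. x i = 0)"

definition Omega :: "nat \<Rightarrow> (nat \<Rightarrow> nat) \<Rightarrow> (nat \<Rightarrow> nat \<Rightarrow> complex) \<Rightarrow> nat \<Rightarrow> pt \<Rightarrow> real" where
  "Omega r N e j \<kappa> = \<kappa> (r + j - 1) + real (N j) / (2 * pi) * (\<Sum>l=1..r. \<kappa> (l - 1) * Arg (e l j))"

end

theory Submission
  imports Defs
begin

definition lin_om :: "nat \<Rightarrow> (pt \<Rightarrow> real) \<Rightarrow> bool" where
  "lin_om p \<omega> \<longleftrightarrow> (\<exists>w. \<forall>x. \<omega> x = (\<Sum>i<p. w i * x i))"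

lemma lin_om_comb: assumes "lin_om p \<omega>" shows "\<omega> (comb c S) = (\<Sum>v\<in>S. c v * \<omega> v)"
proof -
  obtain w where w: "\<forall>x. \<omega> x = (\<Sum>i<p. w i * x i)" using assms unfolding lin_om_def by blast
  have "\<omega> (comb c S) = (\<Sum>i<p. w i * (\<Sum>v\<in>S. c v * v i))" by (simp add: w comb_def)
  also have "\<dots> = (\<Sum>i<p. \<Sum>v\<in>S. c v * (w i * v i))"
    by (simp add: sum_distrib_left mult.assoc mult.left_commute)
  also have "\<dots> = (\<Sum>v\<in>S. c v * (\<Sum>i<p. w i * v i))" by (subst sum.swap) (simp add: sum_distrib_left)
  finally show ?thesis by (simp add: w)
qed

lemma lin_om_padd: "lin_om p \<omega> \<Longrightarrow> \<omega> (padd x y) = \<omega> x + \<omega> y"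
  unfolding lin_om_def padd_def by (auto simp: distrib_left sum.distrib)

lemma lin_om_upd: "lin_om p \<omega> \<Longrightarrow> p \<le> q \<Longrightarrow> \<omega> (x(q:=h)) = \<omega> x"
  unfolding lin_om_def by auto

lemma lin_om_zero: "lin_om p (\<lambda>_. 0)"
  unfolding lin_om_def by (rule exI[of _ "\<lambda>_. 0"]) simp

lemma comb_diff: "comb (\<lambda>v. c v - d v) S = (\<lambda>i. comb c S i - comb d S i)"
  by (simp add: comb_def fun_eq_iff left_diff_distrib sum_subtractf)

lemma bary_unique:
  assumes "aff_indep S" "sum c S = sum d S" "comb c S = comb d S" "v \<in> S"
  shows "c v = d v"
proof -
  have "sum (\<lambda>v. c v - d v) S = 0" using assms(2) by (simp add: sum_subtractf)
  moreover have "comb (\<lambda>v. c v - d v) S = (\<lambda>_. 0)" using assms(3) by (simp add: comb_diff)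
  ultimately have "\<forall>v\<in>S. c v - d v = 0" using assms(1) unfolding aff_indep_def by blast
  thus ?thesis using assms(4) by simp
qed

lemma SpVt_eq:
  assumes "aff_indep (set \<alpha>)" "\<forall>u\<in>set \<alpha>. 0 \<le> c u" "sum c (set \<alpha>) = 1" "x = comb c (set \<alpha>)"
  shows "SpVt \<alpha> x = {v\<in>set \<alpha>. 0 < c v}"
proof -
  have *: "d v = c v" if v: "v \<in> set \<alpha>" and d: "sum d (set \<alpha>) = 1" "x = comb d (set \<alpha>)" for v d
    using bary_unique[OF assms(1), of d c v] d assms v by simp
  show ?thesis
  proof (rule set_eqI, rule iffI)
    fix v assume "v \<in> SpVt \<alpha> x"
    then obtain d where "v\<in>set \<alpha>" "sum d (set \<alpha>) = 1" "x = comb d (set \<alpha>)" "0 < d v"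
      unfolding SpVt_def by blast
    with * show "v \<in> {v\<in>set \<alpha>. 0 < c v}" by auto
  next
    fix v assume "v \<in> {v\<in>set \<alpha>. 0 < c v}" thus "v \<in> SpVt \<alpha> x"
      unfolding SpVt_def using assms by blast
  qed
qed

lemma comb_sub:
  assumes "finite S" "T \<subseteq> S" "\<forall>v\<in>S - T. c v = 0"
  shows "comb c S = comb c T"
  unfolding comb_def fun_eq_iff
proof
  fix i show "(\<Sum>v\<in>S. c v * v i) = (\<Sum>v\<in>T. c v * v i)"
    by (rule sum.mono_neutral_right) (use assms in auto)
qed

lemma chull_mono:
  assumes "finite S" "T \<subseteq> S" shows "chull T \<subseteq> chull S"
proof
  fix x assume "x \<in> chull T"
  then obtain c where c: "\<forall>v\<in>T. 0 \<le> c v" "sum c T = 1" "x = comb c T" unfolding chull_def by blast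
  define d where "d v = (if v \<in> T then c v else 0)" for v
  have dT: "d v = c v" if "v \<in> T" for v using that by (simp add: d_def)
  have "sum d S = sum d T" by (rule sum.mono_neutral_right) (use assms in \<open>auto simp: d_def\<close>)
  also have "\<dots> = sum c T" by (rule sum.cong) (auto simp: dT)
  finally have s: "sum d S = 1" using c by simp
  have "comb d S = comb d T" using assms by (intro comb_sub) (auto simp: d_def)
  also have "comb d T = comb c T" unfolding comb_def fun_eq_iff by (auto intro!: sum.cong simp: dT)
  finally have "x = comb d S" using c by simp
  moreover have "\<forall>v\<in>S. 0 \<le> d v" using c by (simp add: d_def)
  ultimately show "x \<in> chull S" unfolding chull_def using s by blast
qed

lemma in_chull_supp:
  assumes "finite S" "\<forall>v\<in>S. 0 \<le> c v" "sum c S = 1" "x = comb c S"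
  shows "x \<in> chull {v\<in>S. 0 < c v}"
proof -
  have z: "\<forall>v\<in>S - {v\<in>S. 0 < c v}. c v = 0" using assms(2) by force
  have "sum c S = sum c {v\<in>S. 0 < c v}"
    by (rule sum.mono_neutral_right[OF assms(1) _ z]) blast
  hence s1: "sum c {v\<in>S. 0 < c v} = 1" using assms(3) by simp
  have "comb c S = comb c {v\<in>S. 0 < c v}" by (rule comb_sub[OF assms(1) _ z]) blast
  hence x1: "x = comb c {v\<in>S. 0 < c v}" using assms(4) by simp
  have "\<forall>v\<in>{v\<in>S. 0 < c v}. 0 \<le> c v" by simp
  thus ?thesis unfolding chull_def using s1 x1 by blast
qed

lemma cond_i:
  assumes "aff_indep (set a)" "aff_indep (set b)"
    and sp: "\<And>y. y \<in> chull (set a) \<Longrightarrow> y \<in> chull (set b) \<Longrightarrow> SpVt a y = SpVt b y"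
  shows "chull (set a) \<inter> chull (set b) = {} \<or> chull (set a) \<inter> chull (set b) = chull (set a \<inter> set b)"
proof -
  have "chull (set a) \<inter> chull (set b) \<subseteq> chull (set a \<inter> set b)"
  proof
    fix y assume y: "y \<in> chull (set a) \<inter> chull (set b)"
    then obtain c where c: "\<forall>v\<in>set a. 0 \<le> c v" "sum c (set a) = 1" "y = comb c (set a)"
      unfolding chull_def by blast
    have e1: "SpVt a y = {v\<in>set a. 0 < c v}" using SpVt_eq[OF assms(1) c] .
    have "SpVt b y \<subseteq> set b" unfolding SpVt_def by blast
    hence "SpVt a y \<subseteq> set b" using sp[of y] y by simp
    hence sub: "{v\<in>set a. 0 < c v} \<subseteq> set a \<inter> set b" using e1 by auto
    have "y \<in> chull {v\<in>set a. 0 < c v}" using in_chull_supp[OF _ c] by simp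
    thus "y \<in> chull (set a \<inter> set b)" using chull_mono[OF _ sub] by auto
  qed
  moreover have "chull (set a \<inter> set b) \<subseteq> chull (set a) \<inter> chull (set b)"
    using chull_mono[of "set a" "set a \<inter> set b"] chull_mono[of "set b" "set a \<inter> set b"] by auto
  ultimately show ?thesis by blast
qed


lemma pos_Cons: "pos (a#xs) x = (if a = x then 0 else Suc (pos xs x))"
  by (simp add: pos_def)

lemma pos_lt: "x \<in> set xs \<Longrightarrow> pos xs x < length xs"
  by (induction xs) (auto simp: pos_Cons)

lemma pos_inj: "x \<in> set xs \<Longrightarrow> y \<in> set xs \<Longrightarrow> pos xs x = pos xs y \<Longrightarrow> x = y"
  by (induction xs) (auto simp: pos_Cons split: if_splits)

lemma pos_append: "pos (xs @ ys) x = (if x \<in> set xs then pos xs x else length xs + pos ys x)"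
  by (induction xs) (auto simp: pos_Cons)

lemma prec_irrefl: "\<not> prec \<alpha> u u" by (simp add: prec_def)
lemma prec_trans: "prec \<alpha> u v \<Longrightarrow> prec \<alpha> v w \<Longrightarrow> prec \<alpha> u w" by (simp add: prec_def)
lemma prec_total: "u \<in> set \<alpha> \<Longrightarrow> v \<in> set \<alpha> \<Longrightarrow> u \<noteq> v \<Longrightarrow> prec \<alpha> u v \<or> prec \<alpha> v u"
  unfolding prec_def using pos_inj[of u \<alpha> v] by linarith
lemma prec_asym: "prec \<alpha> u v \<Longrightarrow> \<not> prec \<alpha> v u" by (simp add: prec_def)

lemma precA_irrefl: "\<not> precA \<omega> \<alpha> u u" by (simp add: precA_def prec_irrefl)
lemma precA_trans: "precA \<omega> \<alpha> u v \<Longrightarrow> precA \<omega> \<alpha> v w \<Longrightarrow> precA \<omega> \<alpha> u w"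
  unfolding precA_def using prec_trans by fastforce
lemma precA_asym: "precA \<omega> \<alpha> u v \<Longrightarrow> \<not> precA \<omega> \<alpha> v u"
  unfolding precA_def using prec_asym by fastforce
lemma precA_total: "u \<in> set \<alpha> \<Longrightarrow> v \<in> set \<alpha> \<Longrightarrow> u \<noteq> v \<Longrightarrow> precA \<omega> \<alpha> u v \<or> precA \<omega> \<alpha> v u"
  unfolding precA_def using prec_total[of u \<alpha> v] by linarith
lemma precA_A: "precA \<omega> \<alpha> u v \<Longrightarrow> Afun \<omega> u \<le> Afun \<omega> v"
  unfolding precA_def by auto

lemma rank_less: 
  assumes "u \<in> set \<alpha>" "v \<in> set \<alpha>" "precA \<omega> \<alpha> u v"
  shows "rankA \<omega> \<alpha> u < rankA \<omega> \<alpha> v"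
proof -
  have "{w \<in> set \<alpha>. precA \<omega> \<alpha> w u} \<subset> {w \<in> set \<alpha>. precA \<omega> \<alpha> w v}"
    using assms precA_trans[of \<omega> \<alpha> _ u v] precA_irrefl[of \<omega> \<alpha> u] by blast
  thus ?thesis unfolding rankA_def by (intro psubset_card_mono) auto
qed

lemma rank_le:
  assumes "u \<in> set \<alpha>" "v \<in> set \<alpha>"
  shows "rankA \<omega> \<alpha> u \<le> rankA \<omega> \<alpha> v \<longleftrightarrow> (u = v \<or> precA \<omega> \<alpha> u v)"
proof
  assume "rankA \<omega> \<alpha> u \<le> rankA \<omega> \<alpha> v"
  thus "u = v \<or> precA \<omega> \<alpha> u v"
    using rank_less[OF assms(2,1), of \<omega>] precA_total[OF assms, of \<omega>] by fastforce
next
  assume "u = v \<or> precA \<omega> \<alpha> u v"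
  thus "rankA \<omega> \<alpha> u \<le> rankA \<omega> \<alpha> v" using rank_less[OF assms, of \<omega>] by fastforce
qed

lemma Afun_pos: "0 < Afun \<omega> u" unfolding Afun_def by linarith
lemma Afun_le1: "Afun \<omega> u \<le> 1" unfolding Afun_def by linarith
lemma afun_int: "afun \<omega> u = of_int (1 - \<lceil>\<omega> u\<rceil>)" unfolding afun_def Afun_def by simp
lemma afun_Ints: "afun \<omega> u \<in> \<int>" unfolding afun_int by simp
lemma Afun_eq: "Afun \<omega> u = afun \<omega> u + \<omega> u" unfolding afun_def by simp


lemma ext_at_p [simp]: "ext p u h p = h" by (simp add: ext_def)
lemma ext_at_ne [simp]: "i \<noteq> p \<Longrightarrow> ext p u h i = u i" by (simp add: ext_def)
lemma ext_proj: "in_space p u \<Longrightarrow> (ext p u h)(p := 0) = u"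
  unfolding ext_def in_space_def fun_eq_iff by auto
lemma ext_inj: "in_space p u \<Longrightarrow> in_space p u' \<Longrightarrow> ext p u h = ext p u' h' \<Longrightarrow> u = u' \<and> h = h'"
  by (metis ext_at_p ext_proj)

definition Pf :: "(pt \<Rightarrow> real) \<Rightarrow> pt list \<Rightarrow> (pt \<Rightarrow> real) \<Rightarrow> pt \<Rightarrow> real" where
  "Pf \<omega> \<alpha> c u = (\<Sum>u'\<in>set \<alpha>. if u' = u \<or> precA \<omega> \<alpha> u' u then c u' else 0)"
definition Pmf :: "(pt \<Rightarrow> real) \<Rightarrow> pt list \<Rightarrow> (pt \<Rightarrow> real) \<Rightarrow> pt \<Rightarrow> real" where
  "Pmf \<omega> \<alpha> c u = (\<Sum>u'\<in>set \<alpha>. if precA \<omega> \<alpha> u' u then c u' else 0)"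

locale Yloc =
  fixes p :: nat and \<omega> :: "pt \<Rightarrow> real" and \<alpha> :: "pt list" and v :: pt and l :: int
  assumes om: "lin_om p \<omega>"
    and vin: "v \<in> set \<alpha>"
    and sp: "\<forall>u\<in>set \<alpha>. in_space p u"
    and ai: "aff_indep (set \<alpha>)"
begin

abbreviation "R \<equiv> precA \<omega> \<alpha>"
definition topv where "topv u = ext p u (afun \<omega> u + of_int l)"
definition botv where "botv u = ext p u (afun \<omega> u + of_int l - 1)"
definition "TD = {u\<in>set \<alpha>. u = v \<or> R u v}"
definition "BD = {u\<in>set \<alpha>. u = v \<or> R v u}"

lemma Yset: "set (Ysimp p \<omega> \<alpha> v l) = topv ` TD \<union> botv ` BD"
  unfolding Ysimp_def TD_def BD_def topv_def botv_def set_concat set_map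
  by (auto simp: rank_le[OF _ vin] rank_le[OF vin] split: if_splits)

lemma finTD: "finite TD" and finBD: "finite BD" by (auto simp: TD_def BD_def)

lemma inj_top: "inj_on topv (set \<alpha>)"
  unfolding inj_on_def topv_def using sp ext_inj by blast
lemma inj_bot: "inj_on botv (set \<alpha>)"
  unfolding inj_on_def botv_def using sp ext_inj by blast
lemma top_ne_bot: "u \<in> set \<alpha> \<Longrightarrow> u' \<in> set \<alpha> \<Longrightarrow> topv u \<noteq> botv u'"
  unfolding topv_def botv_def using sp ext_inj by fastforce

lemma disj: "topv ` TD \<inter> botv ` BD = {}"
  using top_ne_bot unfolding TD_def BD_def by blast

lemma sum_Y: "sum G (set (Ysimp p \<omega> \<alpha> v l)) = (\<Sum>u\<in>TD. G (topv u)) + (\<Sum>u\<in>BD. G (botv u))"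
proof -
  have "sum G (set (Ysimp p \<omega> \<alpha> v l)) = sum G (topv ` TD) + sum G (botv ` BD)"
    unfolding Yset by (rule sum.union_disjoint) (use finTD finBD disj in auto)
  also have "sum G (topv ` TD) = (\<Sum>u\<in>TD. G (topv u))"
    by (rule sum.reindex_cong[OF inj_on_subset[OF inj_top]]) (auto simp: TD_def)
  also have "sum G (botv ` BD) = (\<Sum>u\<in>BD. G (botv u))"
    by (rule sum.reindex_cong[OF inj_on_subset[OF inj_bot]]) (auto simp: BD_def)
  finally show ?thesis .
qed

lemma sum_TD: "(\<Sum>u\<in>TD. f u) = (\<Sum>u\<in>set \<alpha>. if u = v \<or> R u v then f u else 0)"
  unfolding TD_def by (rule sum.inter_filter) simp
lemma sum_BD: "(\<Sum>u\<in>BD. f u) = (\<Sum>u\<in>set \<alpha>. if u = v \<or> R v u then f u else 0)"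
  unfolding BD_def by (rule sum.inter_filter) simp

definition cof :: "(pt \<Rightarrow> real) \<Rightarrow> pt \<Rightarrow> real" where
  "cof C u = (if u = v \<or> R u v then C (topv u) else 0) + (if u = v \<or> R v u then C (botv u) else 0)"

lemma topv_in: "u \<in> set \<alpha> \<Longrightarrow> u = v \<or> R u v \<Longrightarrow> topv u \<in> set (Ysimp p \<omega> \<alpha> v l)"
  unfolding Yset TD_def by blast
lemma botv_in: "u \<in> set \<alpha> \<Longrightarrow> u = v \<or> R v u \<Longrightarrow> botv u \<in> set (Ysimp p \<omega> \<alpha> v l)"
  unfolding Yset BD_def by blast

lemma top_ne: "i \<noteq> p \<Longrightarrow> topv u i = u i" unfolding topv_def by simp
lemma bot_ne: "i \<noteq> p \<Longrightarrow> botv u i = u i" unfolding botv_def by simp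
lemma top_p: "topv u p = afun \<omega> u + of_int l" unfolding topv_def by simp
lemma bot_p: "botv u p = afun \<omega> u + of_int l - 1" unfolding botv_def by simp

lemma sumY_split: "sum G (set (Ysimp p \<omega> \<alpha> v l)) =
   (\<Sum>u\<in>set \<alpha>. (if u = v \<or> R u v then G (topv u) else 0) + (if u = v \<or> R v u then G (botv u) else 0))"
  unfolding sum_Y sum_TD sum_BD sum.distrib ..

lemma cof_nonneg:
  assumes "\<forall>w\<in>set (Ysimp p \<omega> \<alpha> v l). 0 \<le> C w" "u \<in> set \<alpha>"
  shows "0 \<le> cof C u"
  unfolding cof_def using assms topv_in botv_in by (auto intro!: add_nonneg_nonneg)

lemma cof_sum:
  assumes "sum C (set (Ysimp p \<omega> \<alpha> v l)) = 1"
  shows "sum (cof C) (set \<alpha>) = 1"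
  using assms unfolding sumY_split cof_def .

lemma cof_comb:
  assumes "y = comb C (set (Ysimp p \<omega> \<alpha> v l))"
  shows "y(p:=0) = comb (cof C) (set \<alpha>)"
proof
  fix i
  show "(y(p:=0)) i = comb (cof C) (set \<alpha>) i"
  proof (cases "i = p")
    case True
    have "comb (cof C) (set \<alpha>) i = 0" unfolding comb_def using sp True
      by (auto simp: in_space_def intro!: sum.neutral)
    thus ?thesis using True by simp
  next
    case False
    have "(y(p:=0)) i = (\<Sum>w\<in>set (Ysimp p \<omega> \<alpha> v l). C w * w i)" using False assms by (simp add: comb_def)
    also have "\<dots> = (\<Sum>u\<in>set \<alpha>. (if u = v \<or> R u v then C (topv u) * u i else 0) + (if u = v \<or> R v u then C (botv u) * u i else 0))"
      unfolding sumY_split by (rule sum.cong) (simp_all add: top_ne[OF False] bot_ne[OF False])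
    also have "\<dots> = comb (cof C) (set \<alpha>) i" unfolding comb_def cof_def
      by (rule sum.cong) (auto simp: distrib_right)
    finally show ?thesis .
  qed
qed

lemma yp_formula:
  assumes "y = comb C (set (Ysimp p \<omega> \<alpha> v l))"
  shows "y p = (\<Sum>u\<in>set \<alpha>. (if u = v \<or> R u v then C (topv u) * (afun \<omega> u + of_int l) else 0)
                     + (if u = v \<or> R v u then C (botv u) * (afun \<omega> u + of_int l - 1) else 0))"
proof -
  have "y p = (\<Sum>w\<in>set (Ysimp p \<omega> \<alpha> v l). C w * w p)" using assms by (simp add: comb_def)
  also have "\<dots> = (\<Sum>u\<in>set \<alpha>. (if u = v \<or> R u v then C (topv u) * topv u p else 0)
                     + (if u = v \<or> R v u then C (botv u) * botv u p else 0))"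
    by (rule sumY_split)
  finally show ?thesis by (simp only: top_p bot_p)
qed

lemma excl: "u \<in> set \<alpha> \<Longrightarrow> (u = v \<or> R u v) \<longleftrightarrow> \<not> R v u"
  using precA_total[OF _ vin, of u \<omega>] precA_asym[of \<omega> \<alpha> u v] precA_irrefl[of \<omega> \<alpha> v] by blast

lemma Pf_compl: "Pf \<omega> \<alpha> c v + (\<Sum>u\<in>set \<alpha>. if R v u then c u else 0) = sum c (set \<alpha>)"
  unfolding Pf_def sum.distrib[symmetric] by (rule sum.cong) (auto simp: excl)

lemma zform:
  assumes C: "sum C (set (Ysimp p \<omega> \<alpha> v l)) = 1" and y: "y = comb C (set (Ysimp p \<omega> \<alpha> v l))"
  shows "y p + \<omega> (y(p:=0)) = (\<Sum>u\<in>set \<alpha>. cof C u * Afun \<omega> u) + of_int l - 1 + Pf \<omega> \<alpha> (cof C) v - C (botv v)"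
proof -
  let ?c = "cof C"
  have s1: "sum ?c (set \<alpha>) = 1" by (rule cof_sum[OF C])
  have om1: "\<omega> (y(p:=0)) = (\<Sum>u\<in>set \<alpha>. ?c u * \<omega> u)"
    unfolding cof_comb[OF y] by (rule lin_om_comb[OF om])
  have "y p + \<omega> (y(p:=0)) = (\<Sum>u\<in>set \<alpha>. ?c u * (Afun \<omega> u + of_int l) - (if u = v \<or> R v u then C (botv u) else 0))"
    unfolding yp_formula[OF y] om1 sum.distrib[symmetric]
    by (rule sum.cong) (auto simp: cof_def Afun_eq algebra_simps)
  also have "\<dots> = (\<Sum>u\<in>set \<alpha>. ?c u * Afun \<omega> u) + of_int l * sum ?c (set \<alpha>)
        - (\<Sum>u\<in>set \<alpha>. if u = v \<or> R v u then C (botv u) else 0)"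
    by (simp add: sum_subtractf sum.distrib distrib_left sum_distrib_right sum_distrib_left algebra_simps)
  also have "\<dots> = (\<Sum>u\<in>set \<alpha>. ?c u * Afun \<omega> u) + of_int l
        - (\<Sum>u\<in>set \<alpha>. if u = v \<or> R v u then C (botv u) else 0)" using s1 by simp
  also have "(\<Sum>u\<in>set \<alpha>. if u = v \<or> R v u then C (botv u) else 0)
       = (\<Sum>u\<in>set \<alpha>. (if u = v then C (botv v) else 0) + (if R v u then ?c u else 0))"
  proof (rule sum.cong)
    fix u assume u: "u \<in> set \<alpha>"
    show "(if u = v \<or> R v u then C (botv u) else 0) = (if u = v then C (botv v) else 0) + (if R v u then ?c u else 0)"
      using excl[OF u] precA_irrefl[of \<omega> \<alpha> v] by (auto simp: cof_def)
  qed simp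
  also have "\<dots> = C (botv v) + (\<Sum>u\<in>set \<alpha>. if R v u then ?c u else 0)"
    using vin by (simp add: sum.distrib)
  also have "(\<Sum>u\<in>set \<alpha>. if R v u then ?c u else 0) = 1 - Pf \<omega> \<alpha> ?c v"
    using Pf_compl[of ?c] s1 by simp
  finally show ?thesis by linarith
qed

end

definition Dfn :: "real \<Rightarrow> bool \<Rightarrow> real" where
  "Dfn x b = (if x \<in> \<int> \<and> b then 1 else x - of_int \<lfloor>x\<rfloor>)"

definition Phi :: "(pt \<Rightarrow> real) \<Rightarrow> pt list \<Rightarrow> (pt \<Rightarrow> real) \<Rightarrow> real \<Rightarrow> pt \<Rightarrow> real" where
  "Phi \<omega> \<alpha> c \<zeta> u = (\<Sum>u'\<in>set \<alpha>. c u' * (\<zeta> - Dfn (\<zeta> - \<omega> u') (prec \<alpha> u u')))"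

definition Rset :: "nat \<Rightarrow> (pt \<Rightarrow> real) \<Rightarrow> pt list \<Rightarrow> (pt \<Rightarrow> real) \<Rightarrow> real \<Rightarrow> pt set" where
  "Rset p \<omega> \<alpha> c z = {ext p u h | u h. u \<in> set \<alpha> \<and> 0 < c u \<and> h \<in> \<int> \<and>
      Phi \<omega> \<alpha> c (h + \<omega> u) u - c u < z \<and> z < Phi \<omega> \<alpha> c (h + \<omega> u) u + 1}"

lemma Dfn_shift: "Dfn (x + of_int m) b = Dfn x b"
proof -
  have "x + of_int m \<in> \<int> \<longleftrightarrow> x \<in> \<int>"
    by (metis Ints_add Ints_diff Ints_of_int add_diff_cancel_right')
  thus ?thesis unfolding Dfn_def by simp
qed

lemma Dfn_zero: "Dfn 0 b = (if b then 1 else 0)" unfolding Dfn_def by simp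

lemma not_Ints_frac: fixes d :: real assumes "0 < d" "d < 1" shows "d \<notin> \<int>"
proof
  assume "d \<in> \<int>" then obtain m where "d = of_int m" by (auto elim: Ints_cases)
  hence "0 < m" "m < 1" using assms by simp_all
  thus False by simp
qed

lemma Dfn_pos: "0 < d \<Longrightarrow> d < 1 \<Longrightarrow> Dfn d b = d"
  unfolding Dfn_def using not_Ints_frac[of d] by (simp add: floor_eq_iff)

lemma Dfn_neg: assumes "-1 < d" "d < 0" shows "Dfn d b = d + 1"
proof -
  have "d + 1 \<notin> \<int>" using not_Ints_frac[of "d+1"] assms by simp
  hence "d \<notin> \<int>" using Ints_add[OF _ Ints_1, of d] by blast
  moreover have "\<lfloor>d\<rfloor> = -1" using assms by (simp add: floor_eq_iff)
  ultimately show ?thesis unfolding Dfn_def by simp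
qed

lemma Dterm:
  assumes u: "u \<in> set \<alpha>" and u': "u' \<in> set \<alpha>"
  shows "(Afun \<omega> u + of_int k) - Dfn (Afun \<omega> u + of_int k - \<omega> u') (prec \<alpha> u u')
       = Afun \<omega> u' + of_int k - (if u' = u \<or> precA \<omega> \<alpha> u' u then 0 else 1)"
proof -
  define d where "d = Afun \<omega> u - Afun \<omega> u'"
  have x: "Afun \<omega> u + of_int k - \<omega> u' = d + of_int (k + (1 - \<lceil>\<omega> u'\<rceil>))"
    unfolding d_def Afun_def by simp
  have D: "Dfn (Afun \<omega> u + of_int k - \<omega> u') (prec \<alpha> u u') = Dfn d (prec \<alpha> u u')"
    unfolding x Dfn_shift ..
  have b: "-1 < d" "d < 1" unfolding d_def using Afun_pos[of \<omega>] Afun_le1[of \<omega>] by smt+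
  consider "d = 0" | "0 < d" | "d < 0" by linarith
  thus ?thesis
  proof cases
    case 1
    hence AA: "Afun \<omega> u = Afun \<omega> u'" unfolding d_def by simp
    show ?thesis
    proof (cases "u' = u")
      case True thus ?thesis using 1 D by (simp add: Dfn_zero prec_irrefl)
    next
      case False
      have "prec \<alpha> u u' \<longleftrightarrow> \<not> prec \<alpha> u' u" using prec_total[OF u' u False] prec_asym by blast
      thus ?thesis using 1 D AA False by (simp add: Dfn_zero precA_def)
    qed
  next
    case 2
    hence "precA \<omega> \<alpha> u' u" unfolding d_def precA_def by simp
    thus ?thesis using 2 D b Dfn_pos[of d] unfolding d_def by simp
  next
    case 3
    hence "\<not> precA \<omega> \<alpha> u' u" "u' \<noteq> u" unfolding d_def precA_def by auto
    thus ?thesis using 3 D b Dfn_neg[of d] unfolding d_def by simp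
  qed
qed

lemma Phi_formula:
  assumes u: "u \<in> set \<alpha>"
  shows "Phi \<omega> \<alpha> c (Afun \<omega> u + of_int k) u =
     (\<Sum>u'\<in>set \<alpha>. c u' * Afun \<omega> u') + of_int k * sum c (set \<alpha>) - sum c (set \<alpha>) + Pf \<omega> \<alpha> c u"
proof -
  have "Phi \<omega> \<alpha> c (Afun \<omega> u + of_int k) u =
     (\<Sum>u'\<in>set \<alpha>. c u' * Afun \<omega> u' + of_int k * c u' - c u' + (if u' = u \<or> precA \<omega> \<alpha> u' u then c u' else 0))"
    unfolding Phi_def
  proof (rule sum.cong)
    fix u' assume u': "u' \<in> set \<alpha>"
    have e: "c u' * ((Afun \<omega> u + of_int k) - Dfn (Afun \<omega> u + of_int k - \<omega> u') (prec \<alpha> u u'))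
      = c u' * (Afun \<omega> u' + of_int k - (if u' = u \<or> precA \<omega> \<alpha> u' u then 0 else 1))"
      using Dterm[OF u u', of \<omega> k] by simp
    show "c u' * ((Afun \<omega> u + of_int k) - Dfn (Afun \<omega> u + of_int k - \<omega> u') (prec \<alpha> u u'))
      = c u' * Afun \<omega> u' + of_int k * c u' - c u' + (if u' = u \<or> precA \<omega> \<alpha> u' u then c u' else 0)"
      unfolding e by (cases "u' = u \<or> precA \<omega> \<alpha> u' u") (simp_all add: algebra_simps)
  qed simp
  thus ?thesis unfolding Pf_def by (simp add: sum.distrib sum_subtractf sum_distrib_left)
qed


lemma Pf_split: "u \<in> set \<alpha> \<Longrightarrow> Pf \<omega> \<alpha> c u = c u + Pmf \<omega> \<alpha> c u"
proof -
  assume u: "u \<in> set \<alpha>"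
  have "Pf \<omega> \<alpha> c u = (\<Sum>u'\<in>set \<alpha>. (if u' = u then c u' else 0) + (if precA \<omega> \<alpha> u' u then c u' else 0))"
    unfolding Pf_def by (rule sum.cong) (auto simp: precA_irrefl)
  also have "\<dots> = c u + Pmf \<omega> \<alpha> c u" using u unfolding Pmf_def sum.distrib by simp
  finally show ?thesis .
qed

lemma Pmf_nonneg: "\<forall>u\<in>set \<alpha>. 0 \<le> c u \<Longrightarrow> 0 \<le> Pmf \<omega> \<alpha> c u"
  unfolding Pmf_def by (rule sum_nonneg) auto

lemma Pf_le_sum: "\<forall>u\<in>set \<alpha>. 0 \<le> c u \<Longrightarrow> Pf \<omega> \<alpha> c u \<le> sum c (set \<alpha>)"
  unfolding Pf_def by (rule sum_mono) auto

lemma Pf_le_Pmf: assumes "\<forall>u\<in>set \<alpha>. 0 \<le> c u" "precA \<omega> \<alpha> u v"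
  shows "Pf \<omega> \<alpha> c u \<le> Pmf \<omega> \<alpha> c v"
  unfolding Pf_def Pmf_def
proof (rule sum_mono)
  fix u' assume "u' \<in> set \<alpha>"
  thus "(if u' = u \<or> precA \<omega> \<alpha> u' u then c u' else 0) \<le> (if precA \<omega> \<alpha> u' v then c u' else 0)"
    using assms precA_trans[of \<omega> \<alpha> u' u v] by auto
qed

context Yloc begin

lemma cof_v: "cof C v = C (topv v) + C (botv v)"
  unfolding cof_def by simp
lemma cof_T: "precA \<omega> \<alpha> u v \<Longrightarrow> cof C u = C (topv u)"
  unfolding cof_def using precA_asym[of \<omega> \<alpha> u v] precA_irrefl[of \<omega> \<alpha> v] by auto
lemma cof_B: "precA \<omega> \<alpha> v u \<Longrightarrow> cof C u = C (botv u)"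
  unfolding cof_def using precA_asym[of \<omega> \<alpha> v u] precA_irrefl[of \<omega> \<alpha> v] by auto

lemma Y_aff_indep: "aff_indep (set (Ysimp p \<omega> \<alpha> v l))"
  unfolding aff_indep_def
proof (intro allI impI)
  fix C assume H: "sum C (set (Ysimp p \<omega> \<alpha> v l)) = 0 \<and> comb C (set (Ysimp p \<omega> \<alpha> v l)) = (\<lambda>_. 0)"
  let ?y = "comb C (set (Ysimp p \<omega> \<alpha> v l))"
  have s0: "sum (cof C) (set \<alpha>) = 0" using H unfolding sumY_split cof_def by simp
  have "(\<lambda>_. 0::real)(p:=0) = comb (cof C) (set \<alpha>)" using cof_comb[of ?y C] H by simp
  hence c0: "comb (cof C) (set \<alpha>) = (\<lambda>_. 0)" by (simp add: fun_upd_def)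
  have cz: "\<forall>u\<in>set \<alpha>. cof C u = 0" using ai s0 c0 unfolding aff_indep_def by blast
  have zT: "C (topv u) = 0" if "u \<in> set \<alpha>" "precA \<omega> \<alpha> u v" for u
    using cz that cof_T[of u C] by simp
  have zB: "C (botv u) = 0" if "u \<in> set \<alpha>" "precA \<omega> \<alpha> v u" for u
    using cz that cof_B[of u C] by simp
  have cv: "C (topv v) + C (botv v) = 0" using cz vin cof_v[of C] by simp
  have "?y p = (\<Sum>u\<in>set \<alpha>. (if u = v \<or> R u v then C (topv u) * (afun \<omega> u + of_int l) else 0)
                     + (if u = v \<or> R v u then C (botv u) * (afun \<omega> u + of_int l - 1) else 0))"
    by (rule yp_formula) simp
  also have "\<dots> = (\<Sum>u\<in>set \<alpha>. if u = v then C (topv v) else 0)"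
  proof (rule sum.cong)
    fix u assume u: "u \<in> set \<alpha>"
    show "(if u = v \<or> R u v then C (topv u) * (afun \<omega> u + of_int l) else 0)
        + (if u = v \<or> R v u then C (botv u) * (afun \<omega> u + of_int l - 1) else 0) = (if u = v then C (topv v) else 0)"
    proof (cases "u = v")
      case True
      have "C (botv v) = - C (topv v)" using cv by simp
      thus ?thesis using True by (simp add: algebra_simps)
    next
      case False
      thus ?thesis using zT[OF u] zB[OF u] by auto
    qed
  qed simp
  also have "\<dots> = C (topv v)" using vin by simp
  finally have "C (topv v) = 0" using H by simp
  hence zv: "C (topv v) = 0" "C (botv v) = 0" using cv by auto
  show "\<forall>w\<in>set (Ysimp p \<omega> \<alpha> v l). C w = 0"
  proof
    fix w assume "w \<in> set (Ysimp p \<omega> \<alpha> v l)"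
    then consider u where "u \<in> TD" "w = topv u" | u where "u \<in> BD" "w = botv u" unfolding Yset by blast
    thus "C w = 0"
    proof cases
      case 1 thus ?thesis using zT zv unfolding TD_def by auto
    next
      case 2 thus ?thesis using zB zv unfolding BD_def by auto
    qed
  qed
qed

lemma Ychar_set:
  assumes C0: "\<forall>w\<in>set (Ysimp p \<omega> \<alpha> v l). 0 \<le> C w" and C1: "sum C (set (Ysimp p \<omega> \<alpha> v l)) = 1"
    and y: "y = comb C (set (Ysimp p \<omega> \<alpha> v l))"
  shows "{w \<in> set (Ysimp p \<omega> \<alpha> v l). 0 < C w} = Rset p \<omega> \<alpha> (cof C) (y p + \<omega> (y(p:=0)))"
proof -
  let ?c = "cof C"
  let ?SA = "\<Sum>u\<in>set \<alpha>. ?c u * Afun \<omega> u"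
  define s where "s = Pf \<omega> \<alpha> ?c v - C (botv v)"
  have c0: "\<forall>u\<in>set \<alpha>. 0 \<le> ?c u" using cof_nonneg[OF C0] by blast
  have s1: "sum ?c (set \<alpha>) = 1" by (rule cof_sum[OF C1])
  have z: "y p + \<omega> (y(p:=0)) = ?SA + of_int l - 1 + s" unfolding s_def using zform[OF C1 y] by linarith
  have Ct: "0 \<le> C (topv v)" and Cb: "0 \<le> C (botv v)"
    using C0 topv_in[OF vin] botv_in[OF vin] by auto
  have cv: "?c v = C (topv v) + C (botv v)" by (rule cof_v)
  have Pfs: "\<And>u. u \<in> set \<alpha> \<Longrightarrow> Pf \<omega> \<alpha> ?c u = ?c u + Pmf \<omega> \<alpha> ?c u" by (rule Pf_split)
  have Pm0: "\<And>u. 0 \<le> Pmf \<omega> \<alpha> ?c u" using Pmf_nonneg[OF c0] by blast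
  have P1: "\<And>u. Pf \<omega> \<alpha> ?c u \<le> 1" using Pf_le_sum[OF c0] s1 by simp
  have PP: "\<And>u u'. precA \<omega> \<alpha> u u' \<Longrightarrow> Pf \<omega> \<alpha> ?c u \<le> Pmf \<omega> \<alpha> ?c u'" using Pf_le_Pmf[OF c0] by blast
  have s0: "0 \<le> s" "s \<le> 1" unfolding s_def using Pfs[OF vin] cv Pm0[of v] Ct Cb P1[of v] by linarith+
  have Phi_h: "Phi \<omega> \<alpha> ?c (Afun \<omega> u + of_int k) u = ?SA + of_int k - 1 + Pf \<omega> \<alpha> ?c u"
    if "u \<in> set \<alpha>" for u k using Phi_formula[OF that, of \<omega> ?c k] s1 by simp
  have afl: "afun \<omega> u + of_int k + \<omega> u = Afun \<omega> u + of_int k" for u k by (simp add: Afun_eq)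
  show ?thesis
  proof (rule set_eqI, rule iffI)
    fix w assume "w \<in> {w \<in> set (Ysimp p \<omega> \<alpha> v l). 0 < C w}"
    hence w: "w \<in> set (Ysimp p \<omega> \<alpha> v l)" and Cw: "0 < C w" by auto
    from w consider u where "u \<in> TD" "w = topv u" | u where "u \<in> BD" "w = botv u" unfolding Yset by blast
    thus "w \<in> Rset p \<omega> \<alpha> ?c (y p + \<omega> (y(p:=0)))"
    proof cases
      case 1
      hence u: "u \<in> set \<alpha>" and uv: "u = v \<or> R u v" unfolding TD_def by auto
      have cu: "0 < ?c u" using uv cof_T[of u C] Cw 1 cv Cb by auto
      have ph: "Phi \<omega> \<alpha> ?c (afun \<omega> u + of_int l + \<omega> u) u = ?SA + of_int l - 1 + Pf \<omega> \<alpha> ?c u"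
        unfolding afl by (rule Phi_h[OF u])
      have cond: "Pf \<omega> \<alpha> ?c u - ?c u < s \<and> s < Pf \<omega> \<alpha> ?c u + 1"
      proof (cases "u = v")
        case True thus ?thesis unfolding s_def using Cw 1 cv s0 Cb by (simp add: topv_def)
      next
        case False
        hence "R u v" using uv by simp
        thus ?thesis unfolding s_def using PP[of u v] Pfs[OF vin] Pfs[OF u] cv Ct Cb cu s0 P1[of v] Pm0[of u]
          by linarith
      qed
      have hI: "afun \<omega> u + of_int l \<in> \<int>" using afun_Ints by (simp add: Ints_add)
      show ?thesis unfolding Rset_def z using u cu hI ph cond 1(2) unfolding topv_def
        by (intro CollectI exI[of _ u] exI[of _ "afun \<omega> u + of_int l"]) simp
    next
      case 2
      hence u: "u \<in> set \<alpha>" and uv: "u = v \<or> R v u" unfolding BD_def by auto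
      have cu: "0 < ?c u" using uv cof_B[of u C] Cw 2 cv Ct by auto
      have ph: "Phi \<omega> \<alpha> ?c (afun \<omega> u + of_int (l - 1) + \<omega> u) u = ?SA + of_int (l - 1) - 1 + Pf \<omega> \<alpha> ?c u"
        unfolding afl by (rule Phi_h[OF u])
      have cond: "Pf \<omega> \<alpha> ?c u - ?c u - 1 < s \<and> s < Pf \<omega> \<alpha> ?c u"
      proof (cases "u = v")
        case True thus ?thesis unfolding s_def using Cw 2 cv s0 P1[of v] Ct by (simp add: botv_def)
      next
        case False
        hence "R v u" using uv by simp
        thus ?thesis unfolding s_def using PP[of v u] Pfs[OF vin] Pfs[OF u] cv Ct Cb cu s0 P1[of u] Pm0[of v]
          by linarith
      qed
      have hI: "afun \<omega> u + of_int (l - 1) \<in> \<int>" using afun_Ints by (simp add: Ints_add)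
      have wb: "w = ext p u (afun \<omega> u + of_int (l - 1))" using 2(2) unfolding botv_def by (simp add: algebra_simps)
      show ?thesis unfolding Rset_def z using u cu hI ph cond wb
        by (intro CollectI exI[of _ u] exI[of _ "afun \<omega> u + of_int (l - 1)"]) simp
    qed
  next
    fix w assume "w \<in> Rset p \<omega> \<alpha> ?c (y p + \<omega> (y(p:=0)))"
    then obtain u h where w: "w = ext p u h" and u: "u \<in> set \<alpha>" and cu: "0 < ?c u" and hI: "h \<in> \<int>"
      and q1: "Phi \<omega> \<alpha> ?c (h + \<omega> u) u - ?c u < y p + \<omega> (y(p:=0))"
      and q2: "y p + \<omega> (y(p:=0)) < Phi \<omega> \<alpha> ?c (h + \<omega> u) u + 1"
      unfolding Rset_def by blast
    obtain m where hm: "h = of_int m" using hI by (auto elim: Ints_cases)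
    define k where "k = m - (1 - \<lceil>\<omega> u\<rceil>)"
    have hk: "h = afun \<omega> u + of_int k" unfolding k_def hm afun_int by simp
    have ph: "Phi \<omega> \<alpha> ?c (h + \<omega> u) u = ?SA + of_int k - 1 + Pf \<omega> \<alpha> ?c u"
      unfolding hk afl by (rule Phi_h[OF u])
    have r1: "of_int k + Pf \<omega> \<alpha> ?c u - ?c u < of_int l + s" using q1 unfolding ph z by linarith
    have r2: "of_int l + s < of_int k + 1 + Pf \<omega> \<alpha> ?c u" using q2 unfolding ph z by linarith
    have "of_int k < of_int l + (1::real)" using r1 s0 Pfs[OF u] Pm0[of u] by linarith
    hence kl1: "k \<le> l" by linarith
    have "of_int l < of_int k + (2::real)" using r2 s0 P1[of u] by linarith
    hence kl2: "l - 1 \<le> k" by linarith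
    have wY: "w \<in> set (Ysimp p \<omega> \<alpha> v l) \<and> 0 < C w"
    proof (cases "k = l")
      case True
      have wt: "w = topv u" unfolding w hk True topv_def ..
      have uv: "u = v \<or> R u v"
      proof (rule ccontr)
        assume "\<not> (u = v \<or> R u v)"
        hence "R v u" using precA_total[OF u vin, of \<omega>] by blast
        thus False using PP[of v u] r1 True Pfs[OF u] unfolding s_def using Cb by linarith
      qed
      show ?thesis
      proof (cases "u = v")
        case True
        have "0 < C (topv v)" using r1 `k = l` True cv unfolding s_def by simp
        thus ?thesis using wt True topv_in[OF vin] by simp
      next
        case False
        hence "R u v" using uv by simp
        thus ?thesis using wt cof_T[of u C] cu topv_in[OF u] by simp
      qed
    next
      case False
      hence kk: "k = l - 1" using kl1 kl2 by simp
      have wt: "w = botv u" unfolding w hk kk botv_def by (simp add: algebra_simps)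
      have uv: "u = v \<or> R v u"
      proof (rule ccontr)
        assume "\<not> (u = v \<or> R v u)"
        hence "R u v" using precA_total[OF u vin, of \<omega>] by blast
        thus False using PP[of u v] r2 kk Pfs[OF vin] cv Ct unfolding s_def by simp
      qed
      show ?thesis
      proof (cases "u = v")
        case True
        have "0 < C (botv v)" using r2 kk True unfolding s_def by simp
        thus ?thesis using wt True botv_in[OF vin] by simp
      next
        case False
        hence "R v u" using uv by simp
        thus ?thesis using wt cof_B[of u C] cu botv_in[OF u] by simp
      qed
    qed
    thus "w \<in> {w \<in> set (Ysimp p \<omega> \<alpha> v l). 0 < C w}" by simp
  qed
qed

end

context Yloc begin
lemma Ychar:
  assumes "y \<in> chull (set (Ysimp p \<omega> \<alpha> v l))"
  shows "\<exists>c. (\<forall>u\<in>set \<alpha>. 0 \<le> c u) \<and> sum c (set \<alpha>) = 1 \<and> y(p:=0) = comb c (set \<alpha>)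
     \<and> SpVt (Ysimp p \<omega> \<alpha> v l) y = Rset p \<omega> \<alpha> c (y p + \<omega> (y(p:=0)))"
proof -
  obtain C where C0: "\<forall>w\<in>set (Ysimp p \<omega> \<alpha> v l). 0 \<le> C w" and C1: "sum C (set (Ysimp p \<omega> \<alpha> v l)) = 1"
    and y: "y = comb C (set (Ysimp p \<omega> \<alpha> v l))" using assms unfolding chull_def by blast
  have "SpVt (Ysimp p \<omega> \<alpha> v l) y = {w \<in> set (Ysimp p \<omega> \<alpha> v l). 0 < C w}"
    by (rule SpVt_eq[OF Y_aff_indep C0 C1 y])
  also have "\<dots> = Rset p \<omega> \<alpha> (cof C) (y p + \<omega> (y(p:=0)))" by (rule Ychar_set[OF C0 C1 y])
  finally show ?thesis using cof_nonneg[OF C0] cof_sum[OF C1] cof_comb[OF y] by blast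
qed
end

lemma padd_ext: "in_space p u \<Longrightarrow> in_space p t \<Longrightarrow> padd (ext p u h) (ext p t n) = ext p (padd u t) (h + n)"
  unfolding padd_def ext_def in_space_def fun_eq_iff by auto

lemma sum_transl:
  assumes "finite F" "\<forall>u\<in>F. in_space p u"
  shows "(\<Sum>w\<in>(\<lambda>u. padd u t) ` F. f w) = (\<Sum>u\<in>F. f (padd u t))"
proof -
  have "inj_on (\<lambda>u. padd u t) F" unfolding inj_on_def padd_def fun_eq_iff by auto
  thus ?thesis by (simp add: sum.reindex)
qed

lemma bary_transl:
  assumes ai': "aff_indep (set \<beta>)"
    and c0: "\<forall>u\<in>set \<alpha>. 0 \<le> c u" and c1: "sum c (set \<alpha>) = 1"
    and c'1: "sum c' (set \<beta>) = 1"
    and x': "comb c' (set \<beta>) = padd (comb c (set \<alpha>)) t"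
    and FF: "{u\<in>set \<beta>. 0 < c' u} = (\<lambda>u. padd u t) ` {u\<in>set \<alpha>. 0 < c u}"
    and u: "u \<in> set \<alpha>" "0 < c u"
  shows "c' (padd u t) = c u"
proof -
  let ?F = "{u\<in>set \<alpha>. 0 < c u}" and ?F' = "{u\<in>set \<beta>. 0 < c' u}"
  have inj: "inj_on (\<lambda>u. padd u t) UNIV" unfolding inj_on_def padd_def fun_eq_iff by auto
  define d where "d w = (if w \<in> ?F' then c (psub w t) else 0)" for w
  have pp: "psub (padd u t) t = u" for u unfolding padd_def psub_def by simp
  have pp2: "psub (\<lambda>i. u i + t i) t = u" for u unfolding psub_def by simp
  have sF: "sum c (set \<alpha>) = sum c ?F"
    by (rule sum.mono_neutral_right) (use c0 in \<open>auto simp: less_le\<close>)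
  have sF': "sum d (set \<beta>) = sum d ?F'"
    by (rule sum.mono_neutral_right) (auto simp: d_def)
  have "sum d ?F' = (\<Sum>w\<in>?F'. c (psub w t))" by (rule sum.cong) (auto simp: d_def)
  also have "\<dots> = (\<Sum>u\<in>?F. c u)" unfolding FF by (subst sum.reindex[OF inj_on_subset[OF inj]]) (auto simp: pp)
  finally have d1: "sum d (set \<beta>) = 1" using sF' sF c1 by simp
  have cd: "comb d (set \<beta>) = comb c' (set \<beta>)"
  proof
    fix i
    have "comb d (set \<beta>) i = (\<Sum>w\<in>?F'. d w * w i)" unfolding comb_def
      by (rule sum.mono_neutral_right) (auto simp: d_def)
    also have "\<dots> = (\<Sum>w\<in>?F'. c (psub w t) * w i)" by (rule sum.cong) (auto simp: d_def)
    also have "\<dots> = (\<Sum>u\<in>?F. c u * (u i + t i))" unfolding FF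
      by (subst sum.reindex[OF inj_on_subset[OF inj]]) (auto simp: pp pp2 padd_def)
    also have "\<dots> = (\<Sum>u\<in>?F. c u * u i) + sum c ?F * t i" by (simp add: distrib_left sum.distrib sum_distrib_right)
    also have "(\<Sum>u\<in>?F. c u * u i) = comb c (set \<alpha>) i" unfolding comb_def
      by (rule sum.mono_neutral_left) (use c0 in \<open>auto simp: less_le\<close>)
    finally show "comb d (set \<beta>) i = comb c' (set \<beta>) i" using x' sF c1 by (simp add: padd_def)
  qed
  have "padd u t \<in> ?F'" using FF u by blast
  hence "d (padd u t) = c' (padd u t)" using bary_unique[OF ai', of d c' "padd u t"] d1 c'1 cd by auto
  thus ?thesis unfolding d_def using \<open>padd u t \<in> ?F'\<close> by (simp add: pp)
qed

lemma Rset_transl: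
  assumes om: "lin_om p \<omega>"
    and spa: "\<forall>u\<in>set \<alpha>. in_space p u" and tsp: "in_space p t"
    and ai': "aff_indep (set \<beta>)"
    and c0: "\<forall>u\<in>set \<alpha>. 0 \<le> c u" and c1: "sum c (set \<alpha>) = 1"
    and c'0: "\<forall>u\<in>set \<beta>. 0 \<le> c' u" and c'1: "sum c' (set \<beta>) = 1"
    and x': "comb c' (set \<beta>) = padd (comb c (set \<alpha>)) t"
    and FF: "{u\<in>set \<beta>. 0 < c' u} = (\<lambda>u. padd u t) ` {u\<in>set \<alpha>. 0 < c u}"
    and pr: "\<forall>u\<in>set \<alpha>. \<forall>u'\<in>set \<alpha>. padd u t \<in> set \<beta> \<longrightarrow> padd u' t \<in> set \<beta> \<longrightarrow>
               (prec \<alpha> u u' \<longleftrightarrow> prec \<beta> (padd u t) (padd u' t))"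
  shows "Rset p \<omega> \<beta> c' (z + \<omega> t + of_int n) = (\<lambda>w. padd w (ext p t (of_int n))) ` Rset p \<omega> \<alpha> c z"
proof -
  let ?F = "{u\<in>set \<alpha>. 0 < c u}" and ?F' = "{u\<in>set \<beta>. 0 < c' u}"
  have inj: "inj_on (\<lambda>u. padd u t) UNIV" unfolding inj_on_def padd_def fun_eq_iff by auto
  have injA: "inj_on (\<lambda>u. padd u t) A" for A unfolding inj_on_def padd_def fun_eq_iff by auto
  have cc: "c' (padd u t) = c u" if "u \<in> set \<alpha>" "0 < c u" for u
    by (rule bary_transl[OF ai' c0 c1 c'1 x' FF that])
  have Phi_tr: "Phi \<omega> \<beta> c' (\<zeta> + \<omega> t + of_int n) (padd u t) = Phi \<omega> \<alpha> c \<zeta> u + \<omega> t + of_int n"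
    if u: "u \<in> set \<alpha>" "0 < c u" for u \<zeta>
  proof -
    let ?d = "\<omega> t + of_int n"
    have "Phi \<omega> \<beta> c' (\<zeta> + \<omega> t + of_int n) (padd u t) =
        (\<Sum>w\<in>?F'. c' w * (\<zeta> + \<omega> t + of_int n - Dfn (\<zeta> + \<omega> t + of_int n - \<omega> w) (prec \<beta> (padd u t) w)))"
      unfolding Phi_def by (rule sum.mono_neutral_right) (use c'0 in \<open>auto simp: less_le\<close>)
    also have "\<dots> = (\<Sum>u'\<in>?F. c' (padd u' t) * (\<zeta> + \<omega> t + of_int n - Dfn (\<zeta> + \<omega> t + of_int n - \<omega> (padd u' t)) (prec \<beta> (padd u t) (padd u' t))))"
      unfolding FF by (simp add: sum.reindex[OF injA] o_def)
    also have "\<dots> = (\<Sum>u'\<in>?F. c u' * (\<zeta> - Dfn (\<zeta> - \<omega> u') (prec \<alpha> u u')) + c u' * ?d)"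
    proof (rule sum.cong)
      fix u' assume u': "u' \<in> ?F"
      have inb: "padd u t \<in> set \<beta>" "padd u' t \<in> set \<beta>" using FF u u' by blast+
      have e: "\<zeta> + \<omega> t + of_int n - \<omega> (padd u' t) = (\<zeta> - \<omega> u') + of_int n" using lin_om_padd[OF om] by simp
      have pe: "prec \<beta> (padd u t) (padd u' t) = prec \<alpha> u u'" using pr u u' inb by simp
      have "Dfn (\<zeta> + \<omega> t + of_int n - \<omega> (padd u' t)) (prec \<beta> (padd u t) (padd u' t)) = Dfn (\<zeta> - \<omega> u') (prec \<alpha> u u')"
        unfolding e pe Dfn_shift ..
      thus "c' (padd u' t) * (\<zeta> + \<omega> t + of_int n - Dfn (\<zeta> + \<omega> t + of_int n - \<omega> (padd u' t)) (prec \<beta> (padd u t) (padd u' t))) =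
            c u' * (\<zeta> - Dfn (\<zeta> - \<omega> u') (prec \<alpha> u u')) + c u' * ?d"
        using cc[of u'] u' by (simp add: algebra_simps)
    qed simp
    also have "\<dots> = (\<Sum>u'\<in>?F. c u' * (\<zeta> - Dfn (\<zeta> - \<omega> u') (prec \<alpha> u u'))) + sum c ?F * ?d"
      by (simp add: sum.distrib sum_distrib_right)
    also have "sum c ?F = 1"
    proof -
      have "sum c (set \<alpha>) = sum c ?F"
        by (rule sum.mono_neutral_right) (use c0 in \<open>auto simp: less_le\<close>)
      thus ?thesis using c1 by simp
    qed
    also have "(\<Sum>u'\<in>?F. c u' * (\<zeta> - Dfn (\<zeta> - \<omega> u') (prec \<alpha> u u'))) = Phi \<omega> \<alpha> c \<zeta> u"
      unfolding Phi_def by (rule sum.mono_neutral_left) (use c0 in \<open>auto simp: less_le\<close>)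
    finally show ?thesis by simp
  qed
  show ?thesis
  proof (rule set_eqI, rule iffI)
    fix w assume "w \<in> Rset p \<omega> \<beta> c' (z + \<omega> t + of_int n)"
    then obtain u'' h where w: "w = ext p u'' h" and u'': "u'' \<in> set \<beta>" "0 < c' u''" and hI: "h \<in> \<int>"
      and q1: "Phi \<omega> \<beta> c' (h + \<omega> u'') u'' - c' u'' < z + \<omega> t + of_int n"
      and q2: "z + \<omega> t + of_int n < Phi \<omega> \<beta> c' (h + \<omega> u'') u'' + 1"
      unfolding Rset_def by blast
    from u'' obtain u where u: "u \<in> set \<alpha>" "0 < c u" and uu: "u'' = padd u t" using FF by blast
    have e1: "h + \<omega> u'' = (h - of_int n + \<omega> u) + \<omega> t + of_int n" unfolding uu lin_om_padd[OF om] by simp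
    have P: "Phi \<omega> \<beta> c' (h + \<omega> u'') u'' = Phi \<omega> \<alpha> c (h - of_int n + \<omega> u) u + \<omega> t + of_int n"
      using Phi_tr[OF u, of "h - of_int n + \<omega> u"] e1 uu by simp
    have cu: "c' u'' = c u" unfolding uu by (rule cc[OF u])
    have "ext p u (h - of_int n) \<in> Rset p \<omega> \<alpha> c z" unfolding Rset_def
      using u hI q1 q2 P cu by (intro CollectI exI[of _ u] exI[of _ "h - of_int n"]) (auto simp: Ints_diff)
    moreover have "w = padd (ext p u (h - of_int n)) (ext p t (of_int n))"
      unfolding w uu using padd_ext[of p u t] spa u tsp by simp
    ultimately show "w \<in> (\<lambda>w. padd w (ext p t (of_int n))) ` Rset p \<omega> \<alpha> c z" by blast
  next
    fix w assume "w \<in> (\<lambda>w. padd w (ext p t (of_int n))) ` Rset p \<omega> \<alpha> c z"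
    then obtain u h where w: "w = padd (ext p u h) (ext p t (of_int n))" and u: "u \<in> set \<alpha>" "0 < c u" and hI: "h \<in> \<int>"
      and q1: "Phi \<omega> \<alpha> c (h + \<omega> u) u - c u < z"
      and q2: "z < Phi \<omega> \<alpha> c (h + \<omega> u) u + 1"
      unfolding Rset_def by blast
    have w2: "w = ext p (padd u t) (h + of_int n)" unfolding w using padd_ext[of p u t] spa u tsp by simp
    have inb: "padd u t \<in> set \<beta>" using FF u by blast
    have e1: "h + of_int n + \<omega> (padd u t) = (h + \<omega> u) + \<omega> t + of_int n" using lin_om_padd[OF om] by simp
    have P: "Phi \<omega> \<beta> c' (h + of_int n + \<omega> (padd u t)) (padd u t) = Phi \<omega> \<alpha> c (h + \<omega> u) u + \<omega> t + of_int n"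
      unfolding e1 by (rule Phi_tr[OF u])
    show "w \<in> Rset p \<omega> \<beta> c' (z + \<omega> t + of_int n)" unfolding Rset_def w2
      using inb cc[OF u] u hI q1 q2 P
      by (intro CollectI exI[of _ "padd u t"] exI[of _ "h + of_int n"]) (auto simp: Ints_add)
  qed
qed


lemma pos_concat:
  assumes "distinct xs" "\<forall>x\<in>set xs. \<forall>e\<in>set (f x). g e = x"
    "x \<in> set xs" "e \<in> set (f x)" "x' \<in> set xs" "e' \<in> set (f x')"
  shows "pos (concat (map f xs)) e < pos (concat (map f xs)) e' \<longleftrightarrow>
         pos xs x < pos xs x' \<or> (x = x' \<and> pos (f x) e < pos (f x) e')"
  using assms
proof (induction xs)
  case Nil thus ?case by simp
next
  case (Cons a xs)
  have ea: "e \<in> set (f a) \<longleftrightarrow> x = a" using Cons.prems by auto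
  have ea': "e' \<in> set (f a) \<longleftrightarrow> x' = a" using Cons.prems by auto
  have pl: "pos (f a) e < length (f a)" if "x = a" using pos_lt Cons.prems that by auto
  have pl': "pos (f a) e' < length (f a)" if "x' = a" using pos_lt Cons.prems that by auto
  show ?case
  proof (cases "x = a")
    case True
    show ?thesis
    proof (cases "x' = a")
      case True thus ?thesis using `x = a` ea ea' by (simp add: pos_append pos_Cons)
    next
      case False thus ?thesis using `x = a` ea ea' pl by (simp add: pos_append pos_Cons)
    qed
  next
    case False
    show ?thesis
    proof (cases "x' = a")
      case True thus ?thesis using `x \<noteq> a` ea ea' pl' by (simp add: pos_append pos_Cons)
    next
      case False
      have IH: "pos (concat (map f xs)) e < pos (concat (map f xs)) e' \<longleftrightarrow>
         pos xs x < pos xs x' \<or> (x = x' \<and> pos (f x) e < pos (f x) e')"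
        using Cons.IH Cons.prems `x \<noteq> a` False by auto
      thus ?thesis using `x \<noteq> a` False ea ea' by (simp add: pos_append pos_Cons)
    qed
  qed
qed

lemma distinct_concat_map:
  assumes "distinct xs" "\<forall>x\<in>set xs. distinct (f x)" "\<forall>x\<in>set xs. \<forall>e\<in>set (f x). g e = x"
  shows "distinct (concat (map f xs))"
  using assms
proof (induction xs)
  case Nil thus ?case by simp
next
  case (Cons a xs)
  have "set (f a) \<inter> set (concat (map f xs)) = {}" using Cons.prems by fastforce
  thus ?case using Cons by simp
qed

context Yloc begin

definition fY where "fY u = (if rankA \<omega> \<alpha> u \<le> rankA \<omega> \<alpha> v then [ext p u (afun \<omega> u + of_int l)] else []) @
        (if rankA \<omega> \<alpha> v \<le> rankA \<omega> \<alpha> u then [ext p u (afun \<omega> u + of_int l - 1)] else [])"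

lemma Ysimp_fY: "Ysimp p \<omega> \<alpha> v l = concat (map fY \<alpha>)"
  unfolding Ysimp_def fY_def ..

lemma fY_proj: "u \<in> set \<alpha> \<Longrightarrow> e \<in> set (fY u) \<Longrightarrow> e(p:=0) = u"
  unfolding fY_def using sp ext_proj by (auto split: if_splits)

lemma top_neq_bot_ext: "ext p u (afun \<omega> u + of_int l) \<noteq> ext p u (afun \<omega> u + of_int l - 1)"
proof
  assume "ext p u (afun \<omega> u + of_int l) = ext p u (afun \<omega> u + of_int l - 1)"
  hence "ext p u (afun \<omega> u + of_int l) p = ext p u (afun \<omega> u + of_int l - 1) p" by simp
  thus False by simp
qed

lemma fY_distinct: "distinct (fY u)"
  unfolding fY_def using top_neq_bot_ext[of u] by simp

lemma Y_distinct: assumes "distinct \<alpha>" shows "distinct (Ysimp p \<omega> \<alpha> v l)"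
  unfolding Ysimp_fY using distinct_concat_map[OF assms, of fY "\<lambda>e. e(p:=0)"] fY_distinct fY_proj by blast

lemma fY_pos: assumes u: "u \<in> set \<alpha>" and e: "e \<in> set (fY u)" "e' \<in> set (fY u)"
  shows "pos (fY u) e < pos (fY u) e' \<longleftrightarrow> e' p < e p"
proof -
  let ?a = "ext p u (afun \<omega> u + of_int l)" and ?b = "ext p u (afun \<omega> u + of_int l - 1)"
  have ab: "?a \<noteq> ?b" by (rule top_neq_bot_ext)
  have ap: "?a p = afun \<omega> u + of_int l" and bp: "?b p = afun \<omega> u + of_int l - 1" by simp_all
  consider "fY u = []" | "fY u = [?a]" | "fY u = [?b]" | "fY u = [?a, ?b]" unfolding fY_def
    by (cases "rankA \<omega> \<alpha> u \<le> rankA \<omega> \<alpha> v"; cases "rankA \<omega> \<alpha> v \<le> rankA \<omega> \<alpha> u") simp_all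
  thus ?thesis
  proof cases
    case 1 thus ?thesis using e by simp
  next
    case 2 thus ?thesis using e by simp
  next
    case 3 thus ?thesis using e by simp
  next
    case 4
    have "e = ?a \<or> e = ?b" "e' = ?a \<or> e' = ?b" using e 4 by auto
    thus ?thesis using 4 ab ap bp by (auto simp: pos_Cons)
  qed
qed

lemma vert_form: assumes "w \<in> set (Ysimp p \<omega> \<alpha> v l)"
  shows "\<exists>u\<in>set \<alpha>. w = ext p u (w p) \<and> w(p:=0) = u \<and> w p \<in> \<int>"
proof -
  obtain u where u: "u \<in> set \<alpha>" and w: "w \<in> set (fY u)" using assms unfolding Ysimp_fY by auto
  have wu: "w(p:=0) = u" by (rule fY_proj[OF u w])
  have "w = ext p u (w p)" using wu unfolding ext_def by (metis fun_upd_triv fun_upd_upd)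
  moreover have "w p \<in> \<int>"
  proof -
    have "w p = afun \<omega> u + of_int l \<or> w p = afun \<omega> u + of_int l - 1" using w unfolding fY_def
      by (auto split: if_splits)
    thus ?thesis using afun_Ints[of \<omega> u] by (auto intro: Ints_add Ints_diff)
  qed
  ultimately show ?thesis using u wu by blast
qed

lemma prec_Y:
  assumes w: "w \<in> set (Ysimp p \<omega> \<alpha> v l)" and w': "w' \<in> set (Ysimp p \<omega> \<alpha> v l)" and da: "distinct \<alpha>"
  shows "prec (Ysimp p \<omega> \<alpha> v l) w w' \<longleftrightarrow> prec \<alpha> (w(p:=0)) (w'(p:=0)) \<or> (w(p:=0) = w'(p:=0) \<and> w' p < w p)"
proof -
  have ex: "\<exists>u\<in>set \<alpha>. w \<in> set (fY u)" using w unfolding Ysimp_fY by auto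
  then obtain u where u: "u \<in> set \<alpha>" "w \<in> set (fY u)" by blast
  obtain u' where u': "u' \<in> set \<alpha>" "w' \<in> set (fY u')" using w' unfolding Ysimp_fY by auto
  have pu: "w(p:=0) = u" "w'(p:=0) = u'" using fY_proj u u' by auto
  have "prec (Ysimp p \<omega> \<alpha> v l) w w' \<longleftrightarrow> pos \<alpha> u < pos \<alpha> u' \<or> (u = u' \<and> pos (fY u) w < pos (fY u) w')"
    unfolding prec_def Ysimp_fY using fY_proj
    by (intro pos_concat[where g="\<lambda>e. e(p:=0)"] da u(1) u(2) u'(1) u'(2)) blast
  also have "\<dots> \<longleftrightarrow> prec \<alpha> u u' \<or> (u = u' \<and> w' p < w p)"
    using fY_pos[OF u(1) u(2)] u' unfolding prec_def by auto
  finally show ?thesis using pu by simp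
qed

lemma TD_BD_un: "TD \<union> BD = set \<alpha>"
  unfolding TD_def BD_def using precA_total[OF _ vin, of _ \<omega>] by blast
lemma TD_BD_int: "TD \<inter> BD = {v}"
  unfolding TD_def BD_def using vin precA_asym[of \<omega> \<alpha> v] by blast

lemma Y_length: assumes da: "distinct \<alpha>" shows "length (Ysimp p \<omega> \<alpha> v l) = length \<alpha> + 1"
proof -
  have "length (Ysimp p \<omega> \<alpha> v l) = card (set (Ysimp p \<omega> \<alpha> v l))"
    using distinct_card[OF Y_distinct[OF da]] by simp
  also have "\<dots> = card (topv ` TD) + card (botv ` BD)" unfolding Yset
    by (rule card_Un_disjoint) (use finTD finBD disj in auto)
  also have "\<dots> = card TD + card BD"
    using card_image[OF inj_on_subset[OF inj_top]] card_image[OF inj_on_subset[OF inj_bot]]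
    unfolding TD_def BD_def by auto
  also have "\<dots> = card (TD \<union> BD) + card (TD \<inter> BD)" by (rule card_Un_Int[OF finTD finBD])
  also have "\<dots> = length \<alpha> + 1" unfolding TD_BD_un TD_BD_int using distinct_card[OF da] by simp
  finally show ?thesis .
qed

lemma Y_space: "\<forall>w\<in>set (Ysimp p \<omega> \<alpha> v l). in_space (Suc p) w"
  unfolding Yset TD_def BD_def topv_def botv_def using sp by (auto simp: in_space_def ext_def)

end

lemma ex_minR:
  assumes "finite S" "S \<noteq> {}" "S \<subseteq> set \<alpha>"
  shows "\<exists>m\<in>S. \<forall>u\<in>S. u \<noteq> m \<longrightarrow> precA \<omega> \<alpha> m u"
  using assms
proof (induction S rule: finite_ne_induct)
  case (singleton x) thus ?case by simp
next
  case (insert x F)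
  then obtain m where m: "m \<in> F" "\<forall>u\<in>F. u \<noteq> m \<longrightarrow> precA \<omega> \<alpha> m u" by blast
  have xm: "x \<noteq> m" using m insert by blast
  have xa: "x \<in> set \<alpha>" "m \<in> set \<alpha>" using insert m by auto
  show ?case
  proof (cases "precA \<omega> \<alpha> x m")
    case True
    have "\<forall>u\<in>insert x F. u \<noteq> x \<longrightarrow> precA \<omega> \<alpha> x u"
    proof (intro ballI impI)
      fix u assume "u \<in> insert x F" "u \<noteq> x"
      hence uF: "u \<in> F" by simp
      show "precA \<omega> \<alpha> x u"
      proof (cases "u = m")
        case True thus ?thesis using \<open>precA \<omega> \<alpha> x m\<close> by simp
      next
        case False thus ?thesis using m uF precA_trans[OF \<open>precA \<omega> \<alpha> x m\<close>] by blast
      qed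
    qed
    thus ?thesis by blast
  next
    case False
    hence "precA \<omega> \<alpha> m x" using precA_total[OF xa xm] by blast
    hence "\<forall>u\<in>insert x F. u \<noteq> m \<longrightarrow> precA \<omega> \<alpha> m u" using m by blast
    thus ?thesis using m by blast
  qed
qed

lemma ex_maxR:
  assumes "finite S" "S \<noteq> {}" "S \<subseteq> set \<alpha>"
  shows "\<exists>m\<in>S. \<forall>u\<in>S. u \<noteq> m \<longrightarrow> precA \<omega> \<alpha> u m"
  using assms
proof (induction S rule: finite_ne_induct)
  case (singleton x) thus ?case by simp
next
  case (insert x F)
  then obtain m where m: "m \<in> F" "\<forall>u\<in>F. u \<noteq> m \<longrightarrow> precA \<omega> \<alpha> u m" by blast
  have xm: "x \<noteq> m" using m insert by blast
  have xa: "x \<in> set \<alpha>" "m \<in> set \<alpha>" using insert m by auto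
  show ?case
  proof (cases "precA \<omega> \<alpha> m x")
    case True
    have "\<forall>u\<in>insert x F. u \<noteq> x \<longrightarrow> precA \<omega> \<alpha> u x"
    proof (intro ballI impI)
      fix u assume "u \<in> insert x F" "u \<noteq> x"
      hence uF: "u \<in> F" by simp
      show "precA \<omega> \<alpha> u x"
      proof (cases "u = m")
        case True thus ?thesis using \<open>precA \<omega> \<alpha> m x\<close> by simp
      next
        case False thus ?thesis using m uF precA_trans[OF _ \<open>precA \<omega> \<alpha> m x\<close>] by blast
      qed
    qed
    thus ?thesis by blast
  next
    case False
    hence "precA \<omega> \<alpha> x m" using precA_total[OF xa xm] by blast
    hence "\<forall>u\<in>insert x F. u \<noteq> m \<longrightarrow> precA \<omega> \<alpha> u m" using m by blast
    thus ?thesis using m by blast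
  qed
qed

lemma find_v:
  assumes c0: "\<forall>u\<in>set \<alpha>. 0 \<le> c u" and c1: "sum c (set \<alpha>) = 1" and s0: "0 \<le> \<sigma>" and s1: "\<sigma> < 1"
  shows "\<exists>v\<in>set \<alpha>. Pmf \<omega> \<alpha> c v \<le> \<sigma> \<and> \<sigma> \<le> Pf \<omega> \<alpha> c v"
proof -
  have ne: "set \<alpha> \<noteq> {}" using c1 by auto
  obtain um where um: "um \<in> set \<alpha>" "\<forall>u\<in>set \<alpha>. u \<noteq> um \<longrightarrow> precA \<omega> \<alpha> u um"
    using ex_maxR[OF _ ne, of \<alpha> \<omega>] by blast
  have "Pf \<omega> \<alpha> c um = sum c (set \<alpha>)" unfolding Pf_def by (rule sum.cong) (use um in auto)
  hence umS: "um \<in> {u\<in>set \<alpha>. \<sigma> < Pf \<omega> \<alpha> c u}" using um c1 s1 by simp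
  obtain v where v: "v \<in> {u\<in>set \<alpha>. \<sigma> < Pf \<omega> \<alpha> c u}"
    "\<forall>u\<in>{u\<in>set \<alpha>. \<sigma> < Pf \<omega> \<alpha> c u}. u \<noteq> v \<longrightarrow> precA \<omega> \<alpha> v u"
  proof -
    have f: "finite {u\<in>set \<alpha>. \<sigma> < Pf \<omega> \<alpha> c u}" by simp
    have n: "{u\<in>set \<alpha>. \<sigma> < Pf \<omega> \<alpha> c u} \<noteq> {}" using umS by blast
    have sb: "{u\<in>set \<alpha>. \<sigma> < Pf \<omega> \<alpha> c u} \<subseteq> set \<alpha>" by blast
    show ?thesis using ex_minR[OF f n sb, of \<omega>] that by blast
  qed
  have "Pmf \<omega> \<alpha> c v \<le> \<sigma>"
  proof (cases "{u\<in>set \<alpha>. precA \<omega> \<alpha> u v} = {}")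
    case True
    hence "Pmf \<omega> \<alpha> c v = 0" unfolding Pmf_def by (intro sum.neutral) auto
    thus ?thesis using s0 by simp
  next
    case False
    then obtain us where us: "us \<in> set \<alpha>" "precA \<omega> \<alpha> us v"
      "\<forall>u\<in>{u\<in>set \<alpha>. precA \<omega> \<alpha> u v}. u \<noteq> us \<longrightarrow> precA \<omega> \<alpha> u us"
    proof -
      have f: "finite {u\<in>set \<alpha>. precA \<omega> \<alpha> u v}" by simp
      have sb: "{u\<in>set \<alpha>. precA \<omega> \<alpha> u v} \<subseteq> set \<alpha>" by blast
      obtain m where "m \<in> {u\<in>set \<alpha>. precA \<omega> \<alpha> u v}"
        "\<forall>u\<in>{u\<in>set \<alpha>. precA \<omega> \<alpha> u v}. u \<noteq> m \<longrightarrow> precA \<omega> \<alpha> u m"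
        using ex_maxR[OF f False sb, of \<omega>] by blast
      thus ?thesis using that by blast
    qed
    have "Pf \<omega> \<alpha> c us = Pmf \<omega> \<alpha> c v" unfolding Pf_def Pmf_def
    proof (rule sum.cong)
      fix u assume u: "u \<in> set \<alpha>"
      have "(u = us \<or> precA \<omega> \<alpha> u us) \<longleftrightarrow> precA \<omega> \<alpha> u v"
        using us u precA_trans[of \<omega> \<alpha> u us v] by blast
      thus "(if u = us \<or> precA \<omega> \<alpha> u us then c u else 0) = (if precA \<omega> \<alpha> u v then c u else 0)" by simp
    qed simp
    moreover have "\<not> \<sigma> < Pf \<omega> \<alpha> c us"
    proof
      assume "\<sigma> < Pf \<omega> \<alpha> c us"
      hence "precA \<omega> \<alpha> v us" using v us precA_irrefl[of \<omega> \<alpha> v] by auto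
      thus False using us precA_asym by blast
    qed
    ultimately show ?thesis by simp
  qed
  thus ?thesis using v by auto
qed

context Yloc begin

lemma Y_fill:
  assumes c0: "\<forall>u\<in>set \<alpha>. 0 \<le> c u" and c1: "sum c (set \<alpha>) = 1"
    and s1: "Pmf \<omega> \<alpha> c v \<le> \<sigma>" and s2: "\<sigma> \<le> Pf \<omega> \<alpha> c v"
  shows "ext p (comb c (set \<alpha>)) ((\<Sum>u\<in>set \<alpha>. c u * afun \<omega> u) + of_int l - 1 + \<sigma>) \<in> chull (set (Ysimp p \<omega> \<alpha> v l))"
proof -
  define C where "C w = (if w = topv v then \<sigma> - Pmf \<omega> \<alpha> c v else if w = botv v then Pf \<omega> \<alpha> c v - \<sigma> else c (w(p:=0)))" for w
  have tb: "topv v \<noteq> botv v" using top_ne_bot vin by blast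
  have Ctv: "C (topv v) = \<sigma> - Pmf \<omega> \<alpha> c v" unfolding C_def by simp
  have Cbv: "C (botv v) = Pf \<omega> \<alpha> c v - \<sigma>" unfolding C_def using tb by simp
  have Ctu: "C (topv u) = c u" if "u \<in> set \<alpha>" "u \<noteq> v" for u
  proof -
    have "topv u \<noteq> topv v" using inj_top that vin unfolding inj_on_def by blast
    moreover have "topv u \<noteq> botv v" using top_ne_bot that vin by blast
    moreover have "(topv u)(p:=0) = u" unfolding topv_def using ext_proj sp that by blast
    ultimately show ?thesis unfolding C_def by simp
  qed
  have Cbu: "C (botv u) = c u" if "u \<in> set \<alpha>" "u \<noteq> v" for u
  proof -
    have "botv u \<noteq> botv v" using inj_bot that vin unfolding inj_on_def by blast
    moreover have "botv u \<noteq> topv v" using top_ne_bot that vin by metis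
    moreover have "(botv u)(p:=0) = u" unfolding botv_def using ext_proj sp that by blast
    ultimately show ?thesis unfolding C_def by simp
  qed
  have Pfs: "Pf \<omega> \<alpha> c v = c v + Pmf \<omega> \<alpha> c v" by (rule Pf_split[OF vin])
  have per: "(if u = v \<or> R u v then C (topv u) * f u else 0) + (if u = v \<or> R v u then C (botv u) * f u else 0) = c u * f u"
    if u: "u \<in> set \<alpha>" for u f
  proof (cases "u = v")
    case True
    have e: "C (topv v) + C (botv v) = c v" using Ctv Cbv Pfs by simp
    have "C (topv v) * f v + C (botv v) * f v = c v * f v" using e by (metis distrib_right)
    thus ?thesis using True by simp
  next
    case False
    have "(u = v \<or> R u v) \<longleftrightarrow> \<not> (u = v \<or> R v u)" using excl[OF u] False by blast
    thus ?thesis using Ctu[OF u False] Cbu[OF u False] by auto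
  qed
  have C0: "\<forall>w\<in>set (Ysimp p \<omega> \<alpha> v l). 0 \<le> C w"
  proof
    fix w assume "w \<in> set (Ysimp p \<omega> \<alpha> v l)"
    then consider u where "u \<in> TD" "w = topv u" | u where "u \<in> BD" "w = botv u" unfolding Yset by blast
    thus "0 \<le> C w"
    proof cases
      case 1 thus ?thesis using Ctu Ctv s1 c0 unfolding TD_def by (cases "u = v") auto
    next
      case 2 thus ?thesis using Cbu Cbv s2 c0 unfolding BD_def by (cases "u = v") auto
    qed
  qed
  have C1: "sum C (set (Ysimp p \<omega> \<alpha> v l)) = 1"
  proof -
    have "sum C (set (Ysimp p \<omega> \<alpha> v l)) = sum c (set \<alpha>)"
      unfolding sumY_split
    proof (rule sum.cong)
      fix u assume u: "u \<in> set \<alpha>"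
      show "(if u = v \<or> R u v then C (topv u) else 0) + (if u = v \<or> R v u then C (botv u) else 0) = c u"
        using per[OF u, of "\<lambda>_. 1"] unfolding mult_1_right .
    qed simp
    thus ?thesis using c1 by simp
  qed
  have comb: "comb C (set (Ysimp p \<omega> \<alpha> v l)) = ext p (comb c (set \<alpha>)) ((\<Sum>u\<in>set \<alpha>. c u * afun \<omega> u) + of_int l - 1 + \<sigma>)"
  proof
    fix i
    show "comb C (set (Ysimp p \<omega> \<alpha> v l)) i = ext p (comb c (set \<alpha>)) ((\<Sum>u\<in>set \<alpha>. c u * afun \<omega> u) + of_int l - 1 + \<sigma>) i"
    proof (cases "i = p")
      case False
      have "comb C (set (Ysimp p \<omega> \<alpha> v l)) i = (\<Sum>u\<in>set \<alpha>. (if u = v \<or> R u v then C (topv u) * u i else 0) + (if u = v \<or> R v u then C (botv u) * u i else 0))"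
        unfolding comb_def sumY_split by (rule sum.cong) (simp_all add: top_ne[OF False] bot_ne[OF False])
      also have "\<dots> = comb c (set \<alpha>) i" unfolding comb_def
      proof (rule sum.cong)
        fix u assume u: "u \<in> set \<alpha>"
        show "(if u = v \<or> R u v then C (topv u) * u i else 0) + (if u = v \<or> R v u then C (botv u) * u i else 0) = c u * u i"
          by (rule per[OF u, of "\<lambda>u. u i"])
      qed simp
      finally show ?thesis using False by simp
    next
      case True
      have "comb C (set (Ysimp p \<omega> \<alpha> v l)) p =
          (\<Sum>u\<in>set \<alpha>. (if u = v \<or> R u v then C (topv u) * (afun \<omega> u + of_int l) else 0)
                     + (if u = v \<or> R v u then C (botv u) * (afun \<omega> u + of_int l - 1) else 0))"
        by (rule yp_formula) simp
      also have "\<dots> = (\<Sum>u\<in>set \<alpha>. c u * (afun \<omega> u + of_int l) - (if u = v \<or> R v u then C (botv u) else 0))"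
      proof (rule sum.cong)
        fix u assume u: "u \<in> set \<alpha>"
        have "(if u = v \<or> R u v then C (topv u) * (afun \<omega> u + of_int l) else 0) + (if u = v \<or> R v u then C (botv u) * (afun \<omega> u + of_int l) else 0)
            = c u * (afun \<omega> u + of_int l)" by (rule per[OF u])
        thus "(if u = v \<or> R u v then C (topv u) * (afun \<omega> u + of_int l) else 0)
                     + (if u = v \<or> R v u then C (botv u) * (afun \<omega> u + of_int l - 1) else 0) =
              c u * (afun \<omega> u + of_int l) - (if u = v \<or> R v u then C (botv u) else 0)"
          by (auto simp: algebra_simps split: if_splits)
      qed simp
      also have "\<dots> = (\<Sum>u\<in>set \<alpha>. c u * afun \<omega> u) + of_int l * sum c (set \<alpha>)
          - (\<Sum>u\<in>set \<alpha>. if u = v \<or> R v u then C (botv u) else 0)"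
        by (simp add: sum_subtractf sum.distrib distrib_left sum_distrib_left algebra_simps)
      also have "(\<Sum>u\<in>set \<alpha>. if u = v \<or> R v u then C (botv u) else 0)
          = (\<Sum>u\<in>set \<alpha>. (if u = v then C (botv v) else 0) + (if R v u then c u else 0))"
      proof (rule sum.cong)
        fix u assume u: "u \<in> set \<alpha>"
        show "(if u = v \<or> R v u then C (botv u) else 0) = (if u = v then C (botv v) else 0) + (if R v u then c u else 0)"
          using Cbu[OF u] precA_irrefl[of \<omega> \<alpha> v] by auto
      qed simp
      also have "\<dots> = C (botv v) + (\<Sum>u\<in>set \<alpha>. if R v u then c u else 0)"
        using vin by (simp add: sum.distrib)
      also have "(\<Sum>u\<in>set \<alpha>. if R v u then c u else 0) = 1 - Pf \<omega> \<alpha> c v" using Pf_compl[of c] c1 by simp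
      finally show ?thesis using True Cbv c1 by simp
    qed
  qed
  show ?thesis unfolding chull_def using C0 C1 comb by (intro CollectI exI[of _ C]) simp
qed

lemma Y_open:
  assumes "y \<in> open_simplex (set (Ysimp p \<omega> \<alpha> v l))"
  shows "\<exists>c. (\<forall>u\<in>set \<alpha>. 0 < c u) \<and> sum c (set \<alpha>) = 1 \<and> y(p:=0) = comb c (set \<alpha>) \<and>
     of_int l - 1 < y p - (\<Sum>u\<in>set \<alpha>. c u * afun \<omega> u) \<and> y p - (\<Sum>u\<in>set \<alpha>. c u * afun \<omega> u) < of_int l"
proof -
  obtain C where C0: "\<forall>w\<in>set (Ysimp p \<omega> \<alpha> v l). 0 < C w" and C1: "sum C (set (Ysimp p \<omega> \<alpha> v l)) = 1"
    and y: "y = comb C (set (Ysimp p \<omega> \<alpha> v l))" using assms unfolding open_simplex_def by blast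
  have C0': "\<forall>w\<in>set (Ysimp p \<omega> \<alpha> v l). 0 \<le> C w" using C0 by (simp add: less_imp_le)
  let ?c = "cof C"
  have cpos: "\<forall>u\<in>set \<alpha>. 0 < ?c u"
  proof
    fix u assume u: "u \<in> set \<alpha>"
    show "0 < ?c u"
    proof (cases "u = v \<or> R u v")
      case True
      have "0 < C (topv u)" using C0 topv_in[OF u True] by blast
      moreover have "0 \<le> (if u = v \<or> R v u then C (botv u) else 0)" using C0' botv_in[OF u] by auto
      ultimately show ?thesis unfolding cof_def using True by simp
    next
      case False
      hence B: "u = v \<or> R v u" using excl[OF u] by blast
      have "0 < C (botv u)" using C0 botv_in[OF u B] by blast
      thus ?thesis unfolding cof_def using False B by simp
    qed
  qed
  have s1: "sum ?c (set \<alpha>) = 1" by (rule cof_sum[OF C1])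
  have x: "y(p:=0) = comb ?c (set \<alpha>)" by (rule cof_comb[OF y])
  have z: "y p + \<omega> (y(p:=0)) = (\<Sum>u\<in>set \<alpha>. ?c u * Afun \<omega> u) + of_int l - 1 + Pf \<omega> \<alpha> ?c v - C (botv v)"
    by (rule zform[OF C1 y])
  have om1: "\<omega> (y(p:=0)) = (\<Sum>u\<in>set \<alpha>. ?c u * \<omega> u)" unfolding x by (rule lin_om_comb[OF om])
  have g: "(\<Sum>u\<in>set \<alpha>. ?c u * Afun \<omega> u) = (\<Sum>u\<in>set \<alpha>. ?c u * afun \<omega> u) + (\<Sum>u\<in>set \<alpha>. ?c u * \<omega> u)"
    by (simp add: Afun_eq distrib_left sum.distrib)
  have Ct: "0 < C (topv v)" and Cb: "0 < C (botv v)" using C0 topv_in[OF vin] botv_in[OF vin] by auto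
  have Pfs: "Pf \<omega> \<alpha> ?c v = ?c v + Pmf \<omega> \<alpha> ?c v" by (rule Pf_split[OF vin])
  have cv: "?c v = C (topv v) + C (botv v)" by (rule cof_v)
  have Pm0: "0 \<le> Pmf \<omega> \<alpha> ?c v" using Pmf_nonneg[of \<alpha> ?c] cpos by (simp add: less_imp_le)
  have P1: "Pf \<omega> \<alpha> ?c v \<le> 1" using Pf_le_sum[of \<alpha> ?c] cpos s1 by (simp add: less_imp_le)
  have e: "y p - (\<Sum>u\<in>set \<alpha>. ?c u * afun \<omega> u) = of_int l - 1 + Pf \<omega> \<alpha> ?c v - C (botv v)"
    using z om1 g by linarith
  have b1: "of_int l - 1 < y p - (\<Sum>u\<in>set \<alpha>. ?c u * afun \<omega> u)" using e Pfs cv Pm0 Ct by linarith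
  have b2: "y p - (\<Sum>u\<in>set \<alpha>. ?c u * afun \<omega> u) < of_int l" using e P1 Cb by linarith
  show ?thesis using cpos s1 x b1 b2 by blast
qed

end

lemma set_Ycx: "\<gamma> \<in> set (Ycx p X \<omega> M1 M2) \<longleftrightarrow> (\<exists>\<alpha>\<in>set X. \<exists>v\<in>set \<alpha>. \<exists>l. M1 \<le> l \<and> l < M2 \<and> \<gamma> = Ysimp p \<omega> \<alpha> v l)"
  unfolding Ycx_def by (fastforce simp: image_iff)

lemma comb_space: "\<forall>u\<in>S. in_space p u \<Longrightarrow> in_space p (comb c S)"
  unfolding in_space_def comb_def by (intro allI impI sum.neutral) auto

lemma padd_zero: "padd y (\<lambda>_. 0) = y" unfolding padd_def by simp

lemma upd_zero: "(\<lambda>_. 0::real)(p := 0) = (\<lambda>_. 0)" by (simp add: fun_eq_iff)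

lemma VY:
  assumes LC: "Lambda_complex p L X" and Lsp: "\<forall>t. L t \<longrightarrow> in_space p t" and om: "lin_om p \<omega>"
    and a: "\<alpha> \<in> set X" "v \<in> set \<alpha>" and b: "\<beta> \<in> set X" "v' \<in> set \<beta>"
    and y: "y \<in> chull (set (Ysimp p \<omega> \<alpha> v l))" and y': "y' \<in> chull (set (Ysimp p \<omega> \<beta> v' l'))"
    and LT: "L (T(p:=0))" and Tp: "T p = of_int n" and yy: "y' = padd y T"
  shows "SpVt (Ysimp p \<omega> \<beta> v' l') y' = (\<lambda>w. padd w T) ` SpVt (Ysimp p \<omega> \<alpha> v l) y"
proof -
  have OC: "ordered_complex p X" using LC unfolding Lambda_complex_def by blast
  have I3: "\<forall>\<alpha>\<in>set X. \<forall>\<alpha>'\<in>set X. \<forall>v\<in>set \<alpha>. \<forall>w\<in>set \<alpha>. \<forall>t. L t \<longrightarrow>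
          padd v t \<in> set \<alpha>' \<longrightarrow> padd w t \<in> set \<alpha>' \<longrightarrow>
          (prec \<alpha> v w \<longleftrightarrow> prec \<alpha>' (padd v t) (padd w t))" using LC unfolding Lambda_complex_def by (elim conjE) assumption
  have I5: "\<forall>\<alpha>\<in>set X. \<forall>\<alpha>'\<in>set X. \<forall>x\<in>chull (set \<alpha>). \<forall>x'\<in>chull (set \<alpha>'). \<forall>t.
          L t \<longrightarrow> x' = padd x t \<longrightarrow> SpVt \<alpha>' x' = (\<lambda>v. padd v t) ` SpVt \<alpha> x"
    using LC unfolding Lambda_complex_def by (elim conjE) assumption
  have spa: "\<forall>u\<in>set \<alpha>. in_space p u" and aia: "aff_indep (set \<alpha>)"
    using OC a unfolding ordered_complex_def by auto
  have spb: "\<forall>u\<in>set \<beta>. in_space p u" and aib: "aff_indep (set \<beta>)"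
    using OC b unfolding ordered_complex_def by auto
  interpret Ya: Yloc p \<omega> \<alpha> v l using om a(2) spa aia by unfold_locales
  interpret Yb: Yloc p \<omega> \<beta> v' l' using om b(2) spb aib by unfold_locales
  obtain c where c0: "\<forall>u\<in>set \<alpha>. 0 \<le> c u" and c1: "sum c (set \<alpha>) = 1" and cx: "y(p:=0) = comb c (set \<alpha>)"
    and sv: "SpVt (Ysimp p \<omega> \<alpha> v l) y = Rset p \<omega> \<alpha> c (y p + \<omega> (y(p:=0)))"
    using Ya.Ychar[OF y] by blast
  obtain c' where c'0: "\<forall>u\<in>set \<beta>. 0 \<le> c' u" and c'1: "sum c' (set \<beta>) = 1" and c'x: "y'(p:=0) = comb c' (set \<beta>)"
    and sv': "SpVt (Ysimp p \<omega> \<beta> v' l') y' = Rset p \<omega> \<beta> c' (y' p + \<omega> (y'(p:=0)))"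
    using Yb.Ychar[OF y'] by blast
  define t where "t = T(p:=0)"
  have Lt: "L t" using LT t_def by simp
  have tsp: "in_space p t" using Lsp Lt by blast
  have xx: "y'(p:=0) = padd (y(p:=0)) t" unfolding yy t_def padd_def by (simp add: fun_eq_iff)
  have xa: "y(p:=0) \<in> chull (set \<alpha>)" unfolding chull_def using c0 c1 cx by blast
  have xb: "y'(p:=0) \<in> chull (set \<beta>)" unfolding chull_def using c'0 c'1 c'x by blast
  have base: "SpVt \<beta> (y'(p:=0)) = (\<lambda>u. padd u t) ` SpVt \<alpha> (y(p:=0))"
    using I5 a(1) b(1) xa xb Lt xx by blast
  have FF: "{u\<in>set \<beta>. 0 < c' u} = (\<lambda>u. padd u t) ` {u\<in>set \<alpha>. 0 < c u}"
    using base SpVt_eq[OF aia c0 c1 cx] SpVt_eq[OF aib c'0 c'1 c'x] by simp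
  have pr: "\<forall>u\<in>set \<alpha>. \<forall>u'\<in>set \<alpha>. padd u t \<in> set \<beta> \<longrightarrow> padd u' t \<in> set \<beta> \<longrightarrow>
               (prec \<alpha> u u' \<longleftrightarrow> prec \<beta> (padd u t) (padd u' t))" using I3 a(1) b(1) Lt by blast
  have x': "comb c' (set \<beta>) = padd (comb c (set \<alpha>)) t" using xx cx c'x by simp
  have TT: "T = ext p t (of_int n)" unfolding t_def ext_def using Tp by (simp add: fun_eq_iff)
  have z': "y' p + \<omega> (y'(p:=0)) = (y p + \<omega> (y(p:=0))) + \<omega> t + of_int n"
    unfolding xx lin_om_padd[OF om] using yy Tp by (simp add: padd_def)
  have "SpVt (Ysimp p \<omega> \<beta> v' l') y' = Rset p \<omega> \<beta> c' ((y p + \<omega> (y(p:=0))) + \<omega> t + of_int n)"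
    using sv' z' by simp
  also have "\<dots> = (\<lambda>w. padd w (ext p t (of_int n))) ` Rset p \<omega> \<alpha> c (y p + \<omega> (y(p:=0)))"
    by (rule Rset_transl[OF om spa tsp aib c0 c1 c'0 c'1 x' FF pr])
  finally show ?thesis using sv TT by simp
qed


theorem Y_step:
  assumes LC: "Lambda_complex p L X" and Lsp: "\<forall>t. L t \<longrightarrow> in_space p t" and L0: "L (\<lambda>_. 0)"
    and om: "lin_om p \<omega>" and M12: "M1 < M2"
  shows "Lambda_complex (Suc p) (\<lambda>T. L (T(p:=0)) \<and> (\<exists>m::int. T p = of_int (M2 - M1) * of_int m)) (Ycx p X \<omega> M1 M2)"
proof -
  let ?L' = "\<lambda>T. L (T(p:=0)) \<and> (\<exists>m::int. T p = of_int (M2 - M1) * of_int m)"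
  let ?Y = "Ycx p X \<omega> M1 M2"
  have OC: "ordered_complex p X" using LC unfolding Lambda_complex_def by (elim conjE) assumption
  have I2: "\<forall>\<alpha>\<in>set X. \<forall>\<beta>\<in>set X. \<forall>v\<in>set \<alpha> \<inter> set \<beta>. \<forall>w\<in>set \<alpha> \<inter> set \<beta>.
          prec \<alpha> v w \<longleftrightarrow> prec \<beta> v w" using LC unfolding Lambda_complex_def by (elim conjE) assumption
  have I3: "\<forall>\<alpha>\<in>set X. \<forall>\<alpha>'\<in>set X. \<forall>v\<in>set \<alpha>. \<forall>w\<in>set \<alpha>. \<forall>t. L t \<longrightarrow>
          padd v t \<in> set \<alpha>' \<longrightarrow> padd w t \<in> set \<alpha>' \<longrightarrow>
          (prec \<alpha> v w \<longleftrightarrow> prec \<alpha>' (padd v t) (padd w t))" using LC unfolding Lambda_complex_def by (elim conjE) assumption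
  have I4a: "\<forall>y. in_space p y \<longrightarrow> (\<exists>\<alpha>\<in>set X. \<exists>x\<in>chull (set \<alpha>). L (psub y x))"
    using LC unfolding Lambda_complex_def by (elim conjE) assumption
  have I4b: "\<forall>\<alpha>\<in>set X. \<forall>\<beta>\<in>set X. \<forall>x\<in>open_simplex (set \<alpha>). \<forall>y\<in>open_simplex (set \<beta>).
          L (psub x y) \<longrightarrow> x = y" using LC unfolding Lambda_complex_def by (elim conjE) assumption
  have I5: "\<forall>\<alpha>\<in>set X. \<forall>\<alpha>'\<in>set X. \<forall>x\<in>chull (set \<alpha>). \<forall>x'\<in>chull (set \<alpha>'). \<forall>t.
          L t \<longrightarrow> x' = padd x t \<longrightarrow> SpVt \<alpha>' x' = (\<lambda>v. padd v t) ` SpVt \<alpha> x"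
    using LC unfolding Lambda_complex_def by (elim conjE) assumption
  have base: "distinct \<alpha> \<and> length \<alpha> = p + 1 \<and> (\<forall>u\<in>set \<alpha>. in_space p u) \<and> aff_indep (set \<alpha>)"
    if "\<alpha> \<in> set X" for \<alpha> using OC that unfolding ordered_complex_def by blast
  have YL: "Yloc p \<omega> \<alpha> v" if "\<alpha> \<in> set X" "v \<in> set \<alpha>" for \<alpha> v
    using base[OF that(1)] that(2) om by unfold_locales auto
  have Ymem: "\<And>\<gamma>. \<gamma> \<in> set ?Y \<Longrightarrow> \<exists>\<alpha> v l. \<alpha> \<in> set X \<and> v \<in> set \<alpha> \<and> M1 \<le> l \<and> l < M2 \<and> \<gamma> = Ysimp p \<omega> \<alpha> v l"
    unfolding set_Ycx by blast
  have VV: "SpVt \<gamma>' y' = (\<lambda>w. padd w T) ` SpVt \<gamma> y"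
    if g: "\<gamma> \<in> set ?Y" "\<gamma>' \<in> set ?Y" and y: "y \<in> chull (set \<gamma>)" "y' \<in> chull (set \<gamma>')"
      and LT: "?L' T" and yy: "y' = padd y T" for \<gamma> \<gamma>' y y' T
  proof -
    obtain \<alpha> v l where a: "\<alpha> \<in> set X" "v \<in> set \<alpha>" "\<gamma> = Ysimp p \<omega> \<alpha> v l" using Ymem[OF g(1)] by blast
    obtain \<beta> v' l' where b: "\<beta> \<in> set X" "v' \<in> set \<beta>" "\<gamma>' = Ysimp p \<omega> \<beta> v' l'" using Ymem[OF g(2)] by blast
    obtain m :: int where m: "T p = of_int (M2 - M1) * of_int m" using LT by blast
    have Tp: "T p = of_int ((M2 - M1) * m)" using m by simp
    show ?thesis using VY[OF LC Lsp om a(1,2) b(1,2) _ _ _ Tp yy] y a(3) b(3) LT by simp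
  qed
  have OCY: "ordered_complex (Suc p) ?Y"
    unfolding ordered_complex_def
  proof
    fix \<gamma> assume "\<gamma> \<in> set ?Y"
    then obtain \<alpha> v l where a: "\<alpha> \<in> set X" "v \<in> set \<alpha>" "\<gamma> = Ysimp p \<omega> \<alpha> v l" using Ymem by blast
    interpret Yloc p \<omega> \<alpha> v l by (rule YL[OF a(1,2)])
    show "distinct \<gamma> \<and> length \<gamma> = Suc p + 1 \<and> (\<forall>v\<in>set \<gamma>. in_space (Suc p) v) \<and> aff_indep (set \<gamma>)"
      using Y_distinct Y_length Y_space Y_aff_indep base[OF a(1)] a(3) by simp
  qed
  have P1: "\<forall>\<alpha>\<in>set ?Y. \<forall>\<beta>\<in>set ?Y. chull (set \<alpha>) \<inter> chull (set \<beta>) = {} \<or>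
          chull (set \<alpha>) \<inter> chull (set \<beta>) = chull (set \<alpha> \<inter> set \<beta>)"
  proof (intro ballI)
    fix \<gamma> \<gamma>' assume g: "\<gamma> \<in> set ?Y" "\<gamma>' \<in> set ?Y"
    have ai: "aff_indep (set \<gamma>)" "aff_indep (set \<gamma>')" using OCY g unfolding ordered_complex_def by blast+
    have L'0: "?L' (\<lambda>_. 0)" using L0 by (simp add: upd_zero)
    show "chull (set \<gamma>) \<inter> chull (set \<gamma>') = {} \<or> chull (set \<gamma>) \<inter> chull (set \<gamma>') = chull (set \<gamma> \<inter> set \<gamma>')"
    proof (rule cond_i[OF ai])
      fix y assume y: "y \<in> chull (set \<gamma>)" "y \<in> chull (set \<gamma>')"
      have "SpVt \<gamma>' y = (\<lambda>w. padd w (\<lambda>_. 0)) ` SpVt \<gamma> y"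
        using VV[OF g y L'0] padd_zero by simp
      thus "SpVt \<gamma> y = SpVt \<gamma>' y" by (simp add: padd_zero)
    qed
  qed
  have P2: "\<forall>\<alpha>\<in>set ?Y. \<forall>\<beta>\<in>set ?Y. \<forall>v\<in>set \<alpha> \<inter> set \<beta>. \<forall>w\<in>set \<alpha> \<inter> set \<beta>.
          prec \<alpha> v w \<longleftrightarrow> prec \<beta> v w"
  proof (intro ballI)
    fix \<gamma> \<gamma>' w w' assume g: "\<gamma> \<in> set ?Y" "\<gamma>' \<in> set ?Y" and w: "w \<in> set \<gamma> \<inter> set \<gamma>'" and w': "w' \<in> set \<gamma> \<inter> set \<gamma>'"
    obtain \<alpha> v l where a: "\<alpha> \<in> set X" "v \<in> set \<alpha>" "\<gamma> = Ysimp p \<omega> \<alpha> v l" using Ymem[OF g(1)] by blast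
    obtain \<beta> v' l' where b: "\<beta> \<in> set X" "v' \<in> set \<beta>" "\<gamma>' = Ysimp p \<omega> \<beta> v' l'" using Ymem[OF g(2)] by blast
    interpret Ya: Yloc p \<omega> \<alpha> v l by (rule YL[OF a(1,2)])
    interpret Yb: Yloc p \<omega> \<beta> v' l' by (rule YL[OF b(1,2)])
    have da: "distinct \<alpha>" "distinct \<beta>" using base a(1) b(1) by blast+
    have pa: "prec \<gamma> w w' \<longleftrightarrow> prec \<alpha> (w(p:=0)) (w'(p:=0)) \<or> (w(p:=0) = w'(p:=0) \<and> w' p < w p)"
      using Ya.prec_Y[of w w'] w w' a(3) da by simp
    have pb: "prec \<gamma>' w w' \<longleftrightarrow> prec \<beta> (w(p:=0)) (w'(p:=0)) \<or> (w(p:=0) = w'(p:=0) \<and> w' p < w p)"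
      using Yb.prec_Y[of w w'] w w' b(3) da by simp
    have m1: "w(p:=0) \<in> set \<alpha>" "w'(p:=0) \<in> set \<alpha>" using Ya.vert_form w w' a(3) by force+
    have m2: "w(p:=0) \<in> set \<beta>" "w'(p:=0) \<in> set \<beta>" using Yb.vert_form w w' b(3) by force+
    have "prec \<alpha> (w(p:=0)) (w'(p:=0)) \<longleftrightarrow> prec \<beta> (w(p:=0)) (w'(p:=0))"
      using I2 a(1) b(1) m1 m2 by blast
    thus "prec \<gamma> w w' \<longleftrightarrow> prec \<gamma>' w w'" using pa pb by simp
  qed
  have P3: "\<forall>\<alpha>\<in>set ?Y. \<forall>\<alpha>'\<in>set ?Y. \<forall>v\<in>set \<alpha>. \<forall>w\<in>set \<alpha>. \<forall>t. ?L' t \<longrightarrow>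
          padd v t \<in> set \<alpha>' \<longrightarrow> padd w t \<in> set \<alpha>' \<longrightarrow>
          (prec \<alpha> v w \<longleftrightarrow> prec \<alpha>' (padd v t) (padd w t))"
  proof (intro ballI allI impI)
    fix \<gamma> \<gamma>' w w' T assume g: "\<gamma> \<in> set ?Y" "\<gamma>' \<in> set ?Y" and w: "w \<in> set \<gamma>" and w': "w' \<in> set \<gamma>"
      and LT: "?L' T" and wT: "padd w T \<in> set \<gamma>'" and w'T: "padd w' T \<in> set \<gamma>'"
    obtain \<alpha> v l where a: "\<alpha> \<in> set X" "v \<in> set \<alpha>" "\<gamma> = Ysimp p \<omega> \<alpha> v l" using Ymem[OF g(1)] by blast
    obtain \<beta> v' l' where b: "\<beta> \<in> set X" "v' \<in> set \<beta>" "\<gamma>' = Ysimp p \<omega> \<beta> v' l'" using Ymem[OF g(2)] by blast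
    interpret Ya: Yloc p \<omega> \<alpha> v l by (rule YL[OF a(1,2)])
    interpret Yb: Yloc p \<omega> \<beta> v' l' by (rule YL[OF b(1,2)])
    have da: "distinct \<alpha>" "distinct \<beta>" using base a(1) b(1) by blast+
    define t where "t = T(p:=0)"
    have Lt: "L t" using LT t_def by simp
    have pp: "(padd x T)(p:=0) = padd (x(p:=0)) t" for x unfolding t_def padd_def by (simp add: fun_eq_iff)
    have pa: "prec \<gamma> w w' \<longleftrightarrow> prec \<alpha> (w(p:=0)) (w'(p:=0)) \<or> (w(p:=0) = w'(p:=0) \<and> w' p < w p)"
      using Ya.prec_Y[of w w'] w w' a(3) da by simp
    have pb: "prec \<gamma>' (padd w T) (padd w' T) \<longleftrightarrow> prec \<beta> (padd (w(p:=0)) t) (padd (w'(p:=0)) t) \<or>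
        (padd (w(p:=0)) t = padd (w'(p:=0)) t \<and> w' p + T p < w p + T p)"
      using Yb.prec_Y[of "padd w T" "padd w' T"] wT w'T b(3) da unfolding pp by (simp add: padd_def)
    have m1: "w(p:=0) \<in> set \<alpha>" "w'(p:=0) \<in> set \<alpha>" using Ya.vert_form w w' a(3) by force+
    have m2: "padd (w(p:=0)) t \<in> set \<beta>" "padd (w'(p:=0)) t \<in> set \<beta>"
      using Yb.vert_form[of "padd w T"] Yb.vert_form[of "padd w' T"] wT w'T b(3) unfolding pp by force+
    have "prec \<alpha> (w(p:=0)) (w'(p:=0)) \<longleftrightarrow> prec \<beta> (padd (w(p:=0)) t) (padd (w'(p:=0)) t)"
      using I3 a(1) b(1) m1 m2 Lt by blast
    moreover have "padd (w(p:=0)) t = padd (w'(p:=0)) t \<longleftrightarrow> w(p:=0) = w'(p:=0)"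
      unfolding padd_def fun_eq_iff by auto
    ultimately show "prec \<gamma> w w' \<longleftrightarrow> prec \<gamma>' (padd w T) (padd w' T)" using pa pb by simp
  qed
  have P4a: "\<forall>y. in_space (Suc p) y \<longrightarrow> (\<exists>\<alpha>\<in>set ?Y. \<exists>x\<in>chull (set \<alpha>). ?L' (psub y x))"
  proof (intro allI impI)
    fix y assume ysp: "in_space (Suc p) y"
    have x0sp: "in_space p (y(p:=0))" using ysp unfolding in_space_def by auto
    obtain \<alpha> x where a: "\<alpha> \<in> set X" and xa: "x \<in> chull (set \<alpha>)" and Lx: "L (psub (y(p:=0)) x)"
      using I4a x0sp by blast
    obtain c where c0: "\<forall>u\<in>set \<alpha>. 0 \<le> c u" and c1: "sum c (set \<alpha>) = 1" and cx: "x = comb c (set \<alpha>)"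
      using xa unfolding chull_def by blast
    have xsp: "in_space p x" using cx comb_space base[OF a] by auto
    define g where "g = (\<Sum>u\<in>set \<alpha>. c u * afun \<omega> u)"
    define Mi where "Mi = M2 - M1"
    have Mpos: "(0::real) < of_int Mi" using M12 Mi_def by simp
    define m where "m = \<lfloor>(y p - g - of_int M1 + 1) / of_int Mi\<rfloor>"
    define \<tau> where "\<tau> = y p - of_int Mi * of_int m - g - of_int M1 + 1"
    have fl1: "of_int m * of_int Mi \<le> y p - g - of_int M1 + 1"
      unfolding m_def by (rule floor_divide_lower[OF Mpos])
    have fl2: "y p - g - of_int M1 + 1 < (of_int m + 1) * of_int Mi"
      unfolding m_def by (rule floor_divide_upper[OF Mpos])
    have \<tau>0: "0 \<le> \<tau>" using fl1 unfolding \<tau>_def by (simp add: algebra_simps)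
    have \<tau>1: "\<tau> < of_int Mi" using fl2 unfolding \<tau>_def by (simp add: algebra_simps)
    define l0 where "l0 = \<lfloor>\<tau>\<rfloor>"
    have l00: "0 \<le> l0" using \<tau>0 unfolding l0_def by simp
    have "of_int l0 \<le> \<tau>" unfolding l0_def by simp
    hence "of_int l0 < (of_int Mi :: real)" using \<tau>1 by linarith
    hence l01: "l0 < Mi" by simp
    define \<sigma> where "\<sigma> = \<tau> - of_int l0"
    have \<sigma>0: "0 \<le> \<sigma>" unfolding \<sigma>_def l0_def by simp
    have \<sigma>1: "\<sigma> < 1" unfolding \<sigma>_def l0_def by linarith
    define l where "l = M1 + l0"
    have lr: "M1 \<le> l" "l < M2" using l00 l01 unfolding l_def Mi_def by simp_all
    obtain v where v: "v \<in> set \<alpha>" "Pmf \<omega> \<alpha> c v \<le> \<sigma>" "\<sigma> \<le> Pf \<omega> \<alpha> c v"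
      using find_v[OF c0 c1 \<sigma>0 \<sigma>1] by blast
    interpret Yloc p \<omega> \<alpha> v l by (rule YL[OF a v(1)])
    have hv: "g + of_int l - 1 + \<sigma> = y p - of_int Mi * of_int m" unfolding \<sigma>_def l_def \<tau>_def by simp
    have yin: "ext p x (y p - of_int Mi * of_int m) \<in> chull (set (Ysimp p \<omega> \<alpha> v l))"
      using Y_fill[OF c0 c1 v(2) v(3)] cx hv unfolding g_def by simp
    have \<gamma>in: "Ysimp p \<omega> \<alpha> v l \<in> set ?Y" unfolding set_Ycx using a v(1) lr by blast
    have e1: "(psub y (ext p x (y p - of_int Mi * of_int m)))(p:=0) = psub (y(p:=0)) x"
      unfolding psub_def ext_def fun_eq_iff using xsp by (auto simp: in_space_def)
    have e2: "psub y (ext p x (y p - of_int Mi * of_int m)) p = of_int (M2 - M1) * of_int m"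
      by (simp add: psub_def ext_def Mi_def)
    have "?L' (psub y (ext p x (y p - of_int Mi * of_int m)))" using e1 e2 Lx by auto
    thus "\<exists>\<alpha>\<in>set ?Y. \<exists>x\<in>chull (set \<alpha>). ?L' (psub y x)" using \<gamma>in yin by blast
  qed
  have P4b: "\<forall>\<alpha>\<in>set ?Y. \<forall>\<beta>\<in>set ?Y. \<forall>x\<in>open_simplex (set \<alpha>). \<forall>y\<in>open_simplex (set \<beta>).
          ?L' (psub x y) \<longrightarrow> x = y"
  proof (intro ballI impI)
    fix \<gamma> \<gamma>' y y' assume g: "\<gamma> \<in> set ?Y" "\<gamma>' \<in> set ?Y" and y: "y \<in> open_simplex (set \<gamma>)"
      and y': "y' \<in> open_simplex (set \<gamma>')" and LT: "?L' (psub y y')"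
    obtain \<alpha> v l where a: "\<alpha> \<in> set X" "v \<in> set \<alpha>" "M1 \<le> l" "l < M2" "\<gamma> = Ysimp p \<omega> \<alpha> v l"
      using Ymem[OF g(1)] by blast
    obtain \<beta> v' l' where b: "\<beta> \<in> set X" "v' \<in> set \<beta>" "M1 \<le> l'" "l' < M2" "\<gamma>' = Ysimp p \<omega> \<beta> v' l'"
      using Ymem[OF g(2)] by blast
    interpret Ya: Yloc p \<omega> \<alpha> v l by (rule YL[OF a(1,2)])
    interpret Yb: Yloc p \<omega> \<beta> v' l' by (rule YL[OF b(1,2)])
    have aia: "aff_indep (set \<alpha>)" and aib: "aff_indep (set \<beta>)" using base a(1) b(1) by blast+
    obtain c where c: "\<forall>u\<in>set \<alpha>. 0 < c u" "sum c (set \<alpha>) = 1" "y(p:=0) = comb c (set \<alpha>)"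
      and cb1: "of_int l - 1 < y p - (\<Sum>u\<in>set \<alpha>. c u * afun \<omega> u)"
      and cb2: "y p - (\<Sum>u\<in>set \<alpha>. c u * afun \<omega> u) < of_int l"
      using Ya.Y_open y a(5) by blast
    obtain c' where c': "\<forall>u\<in>set \<beta>. 0 < c' u" "sum c' (set \<beta>) = 1" "y'(p:=0) = comb c' (set \<beta>)"
      and cb1': "of_int l' - 1 < y' p - (\<Sum>u\<in>set \<beta>. c' u * afun \<omega> u)"
      and cb2': "y' p - (\<Sum>u\<in>set \<beta>. c' u * afun \<omega> u) < of_int l'"
      using Yb.Y_open y' b(5) by blast
    have c0: "\<forall>u\<in>set \<alpha>. 0 \<le> c u" using c(1) by (simp add: less_imp_le)
    have c'0: "\<forall>u\<in>set \<beta>. 0 \<le> c' u" using c'(1) by (simp add: less_imp_le)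
    have xo: "y(p:=0) \<in> open_simplex (set \<alpha>)" unfolding open_simplex_def using c by blast
    have xo': "y'(p:=0) \<in> open_simplex (set \<beta>)" unfolding open_simplex_def using c' by blast
    have "(psub y y')(p:=0) = psub (y(p:=0)) (y'(p:=0))" unfolding psub_def by (simp add: fun_eq_iff)
    hence Lxx: "L (psub (y(p:=0)) (y'(p:=0)))" using LT by simp
    have xeq: "y(p:=0) = y'(p:=0)" using I4b a(1) b(1) xo xo' Lxx by blast
    have ca: "y(p:=0) \<in> chull (set \<alpha>)" unfolding chull_def using c0 c(2,3) by blast
    have cb: "y(p:=0) \<in> chull (set \<beta>)" unfolding chull_def using c'0 c'(2,3) xeq by auto
    have "SpVt \<beta> (y(p:=0)) = (\<lambda>v. padd v (\<lambda>_. 0)) ` SpVt \<alpha> (y(p:=0))"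
      using I5 a(1) b(1) ca cb L0 padd_zero by metis
    hence speq: "SpVt \<beta> (y(p:=0)) = SpVt \<alpha> (y(p:=0))" by (simp add: padd_zero)
    have "SpVt \<alpha> (y(p:=0)) = set \<alpha>" using SpVt_eq[OF aia c0 c(2,3)] c(1) by auto
    moreover have "SpVt \<beta> (y(p:=0)) = set \<beta>" using SpVt_eq[OF aib c'0 c'(2)] c'(3) xeq c'(1) by auto
    ultimately have sab: "set \<alpha> = set \<beta>" using speq by simp
    have cc: "c u = c' u" if "u \<in> set \<alpha>" for u
      using bary_unique[OF aia, of c c' u] c(2,3) c'(2,3) sab xeq that by simp
    have geq: "(\<Sum>u\<in>set \<alpha>. c u * afun \<omega> u) = (\<Sum>u\<in>set \<beta>. c' u * afun \<omega> u)"
      unfolding sab[symmetric] by (rule sum.cong) (simp_all add: cc)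
    obtain m :: int where m: "psub y y' p = of_int (M2 - M1) * of_int m" using LT by blast
    have dm: "y p - y' p = of_int ((M2 - M1) * m)" using m by (simp add: psub_def)
    have lM: "of_int l \<le> (of_int M2 :: real) - 1" "of_int M1 \<le> (of_int l :: real)"
      "of_int l' \<le> (of_int M2 :: real) - 1" "of_int M1 \<le> (of_int l' :: real)"
      using a(3,4) b(3,4) by simp_all
    have e: "(of_int (M2 - M1)::real) = of_int M2 - of_int M1" by simp
    have r1: "y p - y' p < of_int M2 - of_int M1" using cb1 cb2 cb1' cb2' geq lM by linarith
    have r2: "- (of_int M2 - of_int M1) < y p - y' p" using cb1 cb2 cb1' cb2' geq lM by linarith
    have "of_int ((M2 - M1) * m) < (of_int (M2 - M1) :: real)"
      using r1 dm e by linarith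
    hence u1: "(M2 - M1) * m < (M2 - M1) * 1" unfolding of_int_less_iff by simp
    have "- (of_int (M2 - M1) :: real) < of_int ((M2 - M1) * m)"
      using r2 dm e by linarith
    hence u2: "(M2 - M1) * (-1) < (M2 - M1) * m" unfolding of_int_minus[symmetric] of_int_less_iff by simp
    have Mp: "0 < M2 - M1" using M12 by simp
    have "m < 1" using u1 Mp mult_less_cancel_left_pos by blast
    moreover have "-1 < m" using u2 Mp mult_less_cancel_left_pos by blast
    ultimately have "m = 0" by simp
    hence ypeq: "y p = y' p" using dm by simp
    show "y = y'"
    proof
      fix i show "y i = y' i"
      proof (cases "i = p")
        case True thus ?thesis using ypeq by simp
      next
        case False thus ?thesis using fun_cong[OF xeq, of i] by simp
      qed
    qed
  qed
  have P5: "\<forall>\<alpha>\<in>set ?Y. \<forall>\<alpha>'\<in>set ?Y. \<forall>x\<in>chull (set \<alpha>). \<forall>x'\<in>chull (set \<alpha>'). \<forall>t.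
          ?L' t \<longrightarrow> x' = padd x t \<longrightarrow> SpVt \<alpha>' x' = (\<lambda>v. padd v t) ` SpVt \<alpha> x"
    using VV by blast
  show ?thesis unfolding Lambda_complex_def using OCY P1 P2 P3 P4a P4b P5 by blast
qed


definition Lat :: "nat \<Rightarrow> (nat \<Rightarrow> nat) \<Rightarrow> nat \<Rightarrow> pt \<Rightarrow> bool" where
  "Lat r N j x \<longleftrightarrow> (\<forall>i<j. if i < r then x i \<in> \<int> else (\<exists>m::int. x i = real (N (i - r + 1)) * of_int m))
      \<and> (\<forall>i\<ge>j. x i = 0)"

definition omj :: "nat \<Rightarrow> (nat \<Rightarrow> nat) \<Rightarrow> (nat \<Rightarrow> nat \<Rightarrow> complex) \<Rightarrow> nat \<Rightarrow> pt \<Rightarrow> real" where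
  "omj r N e j = (if j < r then (\<lambda>_. 0) else omega_fn r N e (j - r + 1))"
definition Mj :: "nat \<Rightarrow> (nat \<Rightarrow> nat) \<Rightarrow> nat \<Rightarrow> int" where
  "Mj r N j = (if j < r then 1 else int (N (j - r + 1)))"

lemma Xc_Suc': "Xc r N e (Suc j) = Ycx j (Xc r N e j) (omj r N e j) 0 (Mj r N j)"
  by (simp add: omj_def Mj_def)

lemma sum_shift1: "(\<Sum>l=1..r. f l) = (\<Sum>i<r. f (Suc i))"
  using sum.atLeast1_atMost_eq[of f r] by simp

lemma omega_lin: assumes "r \<le> p" shows "lin_om p (omega_fn r N e k)"
proof -
  define w where "w i = (if i < r then real (N k) / (2 * pi) * Arg (e (Suc i) k) else 0)" for i
  have "omega_fn r N e k x = (\<Sum>i<p. w i * x i)" for x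
  proof -
    have "omega_fn r N e k x = real (N k) / (2*pi) * (\<Sum>i<r. x i * Arg (e (Suc i) k))"
      unfolding omega_fn_def sum_shift1 by simp
    also have "\<dots> = (\<Sum>i<r. w i * x i)" unfolding w_def sum_distrib_left by (rule sum.cong) auto
    also have "\<dots> = (\<Sum>i<p. w i * x i)"
      by (rule sum.mono_neutral_left) (use assms in \<open>auto simp: w_def\<close>)
    finally show ?thesis .
  qed
  thus ?thesis unfolding lin_om_def by blast
qed

lemma omj_lin: "lin_om j (omj r N e j)"
  unfolding omj_def using lin_om_zero omega_lin[of r j] by auto

lemma Mj_pos: assumes "j < r + r2" "\<forall>k\<in>{1..r2}. N k \<ge> 3" shows "0 < Mj r N j"
proof (cases "j < r")
  case True thus ?thesis by (simp add: Mj_def)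
next
  case False
  hence "j - r + 1 \<in> {1..r2}" using assms(1) by auto
  hence "N (j - r + 1) \<ge> 3" using assms(2) by blast
  thus ?thesis using False by (simp add: Mj_def)
qed

lemma Lat_sp: "Lat r N j t \<Longrightarrow> in_space j t" unfolding Lat_def in_space_def by auto
lemma Lat_zero: "Lat r N j (\<lambda>_. 0)" unfolding Lat_def by auto

lemma Lat_step: "(\<lambda>T. Lat r N j (T(j:=0)) \<and> (\<exists>m::int. T j = of_int (Mj r N j - 0) * of_int m)) = Lat r N (Suc j)"
proof (rule ext)
  fix T
  have cj: "(if j < r then T j \<in> \<int> else (\<exists>m::int. T j = real (N (j - r + 1)) * of_int m))
        \<longleftrightarrow> (\<exists>m::int. T j = of_int (Mj r N j - 0) * of_int m)"
    by (auto simp: Mj_def elim!: Ints_cases)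
  show "(Lat r N j (T(j:=0)) \<and> (\<exists>m::int. T j = of_int (Mj r N j - 0) * of_int m)) = Lat r N (Suc j) T"
    unfolding Lat_def cj[symmetric]
    by (auto simp: less_Suc_eq)
qed

lemma Lat_LamK: "Lat r N (r + r2) = LamK r r2 N"
proof (rule ext)
  fix x
  have a: "(\<forall>i<r + r2. if i < r then x i \<in> \<int> else (\<exists>m::int. x i = real (N (i - r + 1)) * of_int m))
     \<longleftrightarrow> (\<forall>i<r. x i \<in> \<int>) \<and> (\<forall>j\<in>{1..r2}. \<exists>m::int. x (r + j - 1) = real (N j) * of_int m)"
  proof
    assume H: "\<forall>i<r + r2. if i < r then x i \<in> \<int> else (\<exists>m::int. x i = real (N (i - r + 1)) * of_int m)"
    have "\<forall>j\<in>{1..r2}. \<exists>m::int. x (r + j - 1) = real (N j) * of_int m"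
    proof
      fix j assume j: "j \<in> {1..r2}"
      have "r + j - 1 < r + r2" "\<not> r + j - 1 < r" "r + j - 1 - r + 1 = j" using j by auto
      thus "\<exists>m::int. x (r + j - 1) = real (N j) * of_int m" using H by metis
    qed
    moreover have "\<forall>i<r. x i \<in> \<int>" using H by auto
    ultimately show "(\<forall>i<r. x i \<in> \<int>) \<and> (\<forall>j\<in>{1..r2}. \<exists>m::int. x (r + j - 1) = real (N j) * of_int m)" by blast
  next
    assume H: "(\<forall>i<r. x i \<in> \<int>) \<and> (\<forall>j\<in>{1..r2}. \<exists>m::int. x (r + j - 1) = real (N j) * of_int m)"
    show "\<forall>i<r + r2. if i < r then x i \<in> \<int> else (\<exists>m::int. x i = real (N (i - r + 1)) * of_int m)"
    proof (intro allI impI)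
      fix i assume i: "i < r + r2"
      show "if i < r then x i \<in> \<int> else (\<exists>m::int. x i = real (N (i - r + 1)) * of_int m)"
      proof (cases "i < r")
        case True thus ?thesis using H by simp
      next
        case False
        hence j: "i - r + 1 \<in> {1..r2}" "r + (i - r + 1) - 1 = i" using i by auto
        thus ?thesis using H False by metis
      qed
    qed
  qed
  show "Lat r N (r + r2) x = LamK r r2 N x" unfolding Lat_def LamK_def a by simp
qed

lemma chull_z: "chull {(\<lambda>_. 0) :: pt} = {\<lambda>_. 0}"
proof
  show "chull {(\<lambda>_. 0) :: pt} \<subseteq> {\<lambda>_. 0}" unfolding chull_def comb_def by auto
  have "(\<lambda>_. 0) = comb (\<lambda>_. 1) {(\<lambda>_. 0) :: pt}" unfolding comb_def by simp
  thus "{\<lambda>_. 0} \<subseteq> chull {(\<lambda>_. 0) :: pt}" unfolding chull_def by auto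
qed

lemma open_z: "open_simplex {(\<lambda>_. 0) :: pt} \<subseteq> {\<lambda>_. 0}"
  unfolding open_simplex_def comb_def by auto

lemma ai_z: "aff_indep {(\<lambda>_. 0) :: pt}" unfolding aff_indep_def by simp

lemma SpVt_z: "SpVt [(\<lambda>_. 0)] (\<lambda>_. 0) = {\<lambda>_. 0}"
proof -
  have "SpVt [(\<lambda>_. 0)] (\<lambda>_. 0) = {v\<in>set [(\<lambda>_. 0)]. 0 < (\<lambda>_. 1::real) v}"
    by (rule SpVt_eq) (auto simp: ai_z comb_def)
  thus ?thesis by simp
qed

lemma LC0: "Lambda_complex 0 (Lat r N 0) [[(\<lambda>_. 0)]]"
proof -
  have L0: "Lat r N 0 x \<longleftrightarrow> x = (\<lambda>_. 0)" for x unfolding Lat_def by (auto simp: fun_eq_iff)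
  have oc: "ordered_complex 0 [[(\<lambda>_. 0)]]" unfolding ordered_complex_def in_space_def using ai_z by simp
  have p3: "\<forall>\<alpha>\<in>set [[(\<lambda>_. 0)]]. \<forall>\<alpha>'\<in>set [[(\<lambda>_. 0)]]. \<forall>v\<in>set \<alpha>. \<forall>w\<in>set \<alpha>. \<forall>t. Lat r N 0 t \<longrightarrow>
          padd v t \<in> set \<alpha>' \<longrightarrow> padd w t \<in> set \<alpha>' \<longrightarrow>
          (prec \<alpha> v w \<longleftrightarrow> prec \<alpha>' (padd v t) (padd w t))" by (simp add: prec_irrefl)
  have p4a: "\<forall>y. in_space 0 y \<longrightarrow> (\<exists>\<alpha>\<in>set [[(\<lambda>_. 0)]]. \<exists>x\<in>chull (set \<alpha>). Lat r N 0 (psub y x))"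
  proof (intro allI impI)
    fix y :: pt assume "in_space 0 y"
    hence "y = (\<lambda>_. 0)" unfolding in_space_def by auto
    hence "Lat r N 0 (psub y (\<lambda>_. 0))" unfolding L0 psub_def by simp
    thus "\<exists>\<alpha>\<in>set [[(\<lambda>_. 0)]]. \<exists>x\<in>chull (set \<alpha>). Lat r N 0 (psub y x)" using chull_z by auto
  qed
  have p4b: "\<forall>\<alpha>\<in>set [[(\<lambda>_. 0)]]. \<forall>\<beta>\<in>set [[(\<lambda>_. 0)]]. \<forall>x\<in>open_simplex (set \<alpha>). \<forall>y\<in>open_simplex (set \<beta>).
          Lat r N 0 (psub x y) \<longrightarrow> x = y" using open_z by auto
  have p5: "\<forall>\<alpha>\<in>set [[(\<lambda>_. 0)]]. \<forall>\<alpha>'\<in>set [[(\<lambda>_. 0)]]. \<forall>x\<in>chull (set \<alpha>). \<forall>x'\<in>chull (set \<alpha>'). \<forall>t.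
          Lat r N 0 t \<longrightarrow> x' = padd x t \<longrightarrow> SpVt \<alpha>' x' = (\<lambda>v. padd v t) ` SpVt \<alpha> x"
  proof (intro ballI allI impI)
    fix \<alpha> \<alpha>' x x' t assume a: "\<alpha> \<in> set [[(\<lambda>_. 0)]]" "\<alpha>' \<in> set [[(\<lambda>_. 0)]]"
      and x: "x \<in> chull (set \<alpha>)" "x' \<in> chull (set \<alpha>')" and "Lat r N 0 t" and "x' = padd x t"
    hence "t = (\<lambda>_. 0)" using L0 by blast
    thus "SpVt \<alpha>' x' = (\<lambda>v. padd v t) ` SpVt \<alpha> x" using a x chull_z SpVt_z padd_zero by auto
  qed
  show ?thesis unfolding Lambda_complex_def using oc p3 p4a p4b p5 by auto
qed

lemma LC_all: "j \<le> r + r2 \<Longrightarrow> \<forall>k\<in>{1..r2}. N k \<ge> 3 \<Longrightarrow> Lambda_complex j (Lat r N j) (Xc r N e j)"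
proof (induction j)
  case 0 thus ?case using LC0 by simp
next
  case (Suc j)
  have IH: "Lambda_complex j (Lat r N j) (Xc r N e j)" using Suc by simp
  have M: "0 < Mj r N j" using Mj_pos[of j r r2 N] Suc.prems by simp
  have "Lambda_complex (Suc j) (\<lambda>T. Lat r N j (T(j:=0)) \<and> (\<exists>m::int. T j = of_int (Mj r N j - 0) * of_int m))
          (Ycx j (Xc r N e j) (omj r N e j) 0 (Mj r N j))"
    by (rule Y_step[OF IH _ Lat_zero omj_lin]) (use M Lat_sp in auto)
  thus ?case unfolding Lat_step Xc_Suc' .
qed


lemma len_Ycx: "\<forall>\<alpha>\<in>set X. length \<alpha> = k \<Longrightarrow> length (Ycx p X \<omega> M1 M2) = length X * k * nat (M2 - M1)"
proof (induction X)
  case Nil thus ?case by (simp add: Ycx_def)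
next
  case (Cons \<alpha> X)
  have "length (concat (map (\<lambda>v. map (\<lambda>l. Ysimp p \<omega> \<alpha> v l) [M1..M2 - 1]) \<alpha>)) = length \<alpha> * nat (M2 - M1)"
    by (simp add: length_concat o_def sum_list_triv)
  moreover have "length (Ycx p X \<omega> M1 M2) = length X * k * nat (M2 - M1)" using Cons by simp
  moreover have "Ycx p (\<alpha> # X) \<omega> M1 M2 = concat (map (\<lambda>v. map (\<lambda>l. Ysimp p \<omega> \<alpha> v l) [M1..M2 - 1]) \<alpha>) @ Ycx p X \<omega> M1 M2"
    by (simp add: Ycx_def)
  ultimately show ?case using Cons.prems by (simp add: algebra_simps)
qed

lemma Omega_alt: "Omega r N e jj \<kappa> = \<kappa> (r + jj - 1) + omega_fn r N e jj \<kappa>"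
  by (simp add: Omega_def omega_fn_def)

context
  fixes r r2 :: nat and N :: "nat \<Rightarrow> nat" and e :: "nat \<Rightarrow> nat \<Rightarrow> complex"
  assumes N3: "\<forall>k\<in>{1..r2}. N k \<ge> 3"
begin

lemma YL_at: assumes "j \<le> r + r2" "\<alpha> \<in> set (Xc r N e j)" "v \<in> set \<alpha>"
  shows "Yloc j (omj r N e j) \<alpha> v"
proof -
  have "ordered_complex j (Xc r N e j)" using LC_all[OF assms(1) N3, of e] unfolding Lambda_complex_def by blast
  hence "(\<forall>u\<in>set \<alpha>. in_space j u) \<and> aff_indep (set \<alpha>)" using assms(2) unfolding ordered_complex_def by blast
  thus ?thesis using omj_lin assms(3) by unfold_locales auto
qed

lemma Ysimp_of: assumes "\<gamma> \<in> set (Xc r N e (Suc j))"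
  shows "\<exists>\<alpha> v l. \<alpha> \<in> set (Xc r N e j) \<and> v \<in> set \<alpha> \<and> \<gamma> = Ysimp j (omj r N e j) \<alpha> v l"
  using assms unfolding Xc_Suc' set_Ycx by blast

lemma Int_all: "j \<le> r + r2 \<Longrightarrow> \<forall>\<alpha>\<in>set (Xc r N e j). \<forall>v\<in>set \<alpha>. \<forall>i. v i \<in> \<int>"
proof (induction j)
  case 0 thus ?case by simp
next
  case (Suc j)
  show ?case
  proof (intro ballI allI)
    fix \<gamma> w i assume g: "\<gamma> \<in> set (Xc r N e (Suc j))" and w: "w \<in> set \<gamma>"
    obtain \<alpha> v l where a: "\<alpha> \<in> set (Xc r N e j)" "v \<in> set \<alpha>" "\<gamma> = Ysimp j (omj r N e j) \<alpha> v l"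
      using Ysimp_of[OF g] by blast
    interpret Yloc j "omj r N e j" \<alpha> v l using YL_at[of j \<alpha> v] Suc.prems a by simp
    obtain u where u: "u \<in> set \<alpha>" "w = ext j u (w j)" "w j \<in> \<int>" using vert_form w a(3) by blast
    have IH: "\<forall>i. u i \<in> \<int>" using Suc a u by simp
    show "w i \<in> \<int>"
    proof (cases "i = j")
      case True thus ?thesis using u by simp
    next
      case False
      have "w i = u i" using u(2) False by (metis ext_at_ne)
      thus ?thesis using IH by simp
    qed
  qed
qed

lemma len_all: "j \<le> r + r2 \<Longrightarrow> length (Xc r N e j) = fact j * (\<Prod>k\<in>{1..j - r}. N k)"
proof (induction j)
  case 0 thus ?case by simp
next
  case (Suc j)
  have IH: "length (Xc r N e j) = fact j * (\<Prod>k\<in>{1..j - r}. N k)" using Suc by simp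
  have "ordered_complex j (Xc r N e j)" using LC_all[of j r r2 N e] Suc.prems N3 unfolding Lambda_complex_def by simp
  hence la: "\<forall>\<alpha>\<in>set (Xc r N e j). length \<alpha> = j + 1" unfolding ordered_complex_def by blast
  have "length (Xc r N e (Suc j)) = length (Xc r N e j) * (j + 1) * nat (Mj r N j - 0)"
    unfolding Xc_Suc' by (rule len_Ycx[OF la])
  also have "\<dots> = fact (Suc j) * (\<Prod>k\<in>{1..Suc j - r}. N k)"
  proof (cases "j < r")
    case True
    hence "Suc j - r = 0" "j - r = 0" by simp_all
    thus ?thesis using IH True by (simp add: Mj_def algebra_simps)
  next
    case False
    hence s: "Suc j - r = Suc (j - r)" by simp
    have "(\<Prod>k\<in>{1..Suc (j - r)}. N k) = (\<Prod>k\<in>{1..j - r}. N k) * N (Suc (j - r))"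
      by (simp add: prod.nat_ivl_Suc')
    thus ?thesis using IH False s by (simp add: Mj_def algebra_simps)
  qed
  finally show ?case .
qed

lemma Omega_ext: assumes "r + jj - 1 < q" "r \<le> q"
  shows "Omega r N e jj (ext q u h) = Omega r N e jj u"
proof -
  have "omega_fn r N e jj (ext q u h) = omega_fn r N e jj u"
    unfolding ext_def by (rule lin_om_upd[OF omega_lin[of r r]]) (use assms in auto)
  moreover have "ext q u h (r + jj - 1) = u (r + jj - 1)" using assms(1) by simp
  ultimately show ?thesis unfolding Omega_alt by simp
qed

lemma Om_base: assumes jj: "jj \<in> {1..r2}"
  shows "\<forall>\<gamma>\<in>set (Xc r N e (r + jj)). \<exists>a. \<forall>w\<in>set \<gamma>. a \<le> Omega r N e jj w \<and> Omega r N e jj w \<le> a + 1"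
proof
  fix \<gamma> assume g0: "\<gamma> \<in> set (Xc r N e (r + jj))"
  define q where "q = r + jj - 1"
  have qS: "r + jj = Suc q" "r \<le> q" "q - r + 1 = jj" "\<not> q < r" using jj unfolding q_def by auto
  have g: "\<gamma> \<in> set (Xc r N e (Suc q))" using g0 qS by simp
  obtain \<alpha> v l where a: "\<alpha> \<in> set (Xc r N e q)" "v \<in> set \<alpha>" "\<gamma> = Ysimp q (omj r N e q) \<alpha> v l"
    using Ysimp_of[OF g] by blast
  have omq: "omj r N e q = omega_fn r N e jj" unfolding omj_def using qS by simp
  interpret Yloc q "omj r N e q" \<alpha> v l using YL_at[of q \<alpha> v] a jj qS by simp
  let ?A = "Afun (omj r N e q)"
  have Oext: "Omega r N e jj (ext q u h) = h + omj r N e q u" for u h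
  proof -
    have "omega_fn r N e jj (ext q u h) = omega_fn r N e jj u"
      unfolding ext_def by (rule lin_om_upd[OF omega_lin[of r q]]) (use qS in auto)
    moreover have "ext q u h (r + jj - 1) = h" using q_def by simp
    ultimately show ?thesis unfolding Omega_alt using omq by simp
  qed
  have "\<forall>w\<in>set \<gamma>. ?A v + of_int l - 1 \<le> Omega r N e jj w \<and> Omega r N e jj w \<le> ?A v + of_int l - 1 + 1"
  proof
    fix w assume "w \<in> set \<gamma>"
    then consider u where "u \<in> TD" "w = topv u" | u where "u \<in> BD" "w = botv u" unfolding Yset a(3) by blast
    thus "?A v + of_int l - 1 \<le> Omega r N e jj w \<and> Omega r N e jj w \<le> ?A v + of_int l - 1 + 1"
    proof cases
      case 1
      have le: "?A u \<le> ?A v" using 1(1) precA_A unfolding TD_def by auto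
      have "Omega r N e jj w = ?A u + of_int l" unfolding 1(2) topv_def Oext by (simp add: Afun_eq)
      thus ?thesis using le Afun_pos[of "omj r N e q" u] Afun_le1[of "omj r N e q" v] by simp
    next
      case 2
      have le: "?A v \<le> ?A u" using 2(1) precA_A unfolding BD_def by auto
      have "Omega r N e jj w = ?A u + of_int l - 1" unfolding 2(2) botv_def Oext by (simp add: Afun_eq)
      thus ?thesis using le Afun_pos[of "omj r N e q" v] Afun_le1[of "omj r N e q" u] by simp
    qed
  qed
  thus "\<exists>a. \<forall>w\<in>set \<gamma>. a \<le> Omega r N e jj w \<and> Omega r N e jj w \<le> a + 1" by blast
qed

lemma Om_all: assumes jj: "jj \<in> {1..r2}"
  shows "r + jj + d \<le> r + r2 \<Longrightarrow> \<forall>\<gamma>\<in>set (Xc r N e (r + jj + d)). \<exists>a. \<forall>w\<in>set \<gamma>. a \<le> Omega r N e jj w \<and> Omega r N e jj w \<le> a + 1"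
proof (induction d)
  case 0 thus ?case using Om_base[OF jj] by simp
next
  case (Suc d)
  show ?case
  proof
    fix \<gamma> assume g0: "\<gamma> \<in> set (Xc r N e (r + jj + Suc d))"
    let ?q = "r + jj + d"
    have g: "\<gamma> \<in> set (Xc r N e (Suc ?q))" using g0 by simp
    obtain \<alpha> v l where a: "\<alpha> \<in> set (Xc r N e ?q)" "v \<in> set \<alpha>" "\<gamma> = Ysimp ?q (omj r N e ?q) \<alpha> v l"
      using Ysimp_of[OF g] by blast
    interpret Yloc ?q "omj r N e ?q" \<alpha> v l using YL_at[of ?q \<alpha> v] a Suc.prems by simp
    obtain b where b: "\<forall>w\<in>set \<alpha>. b \<le> Omega r N e jj w \<and> Omega r N e jj w \<le> b + 1"
      using Suc a by auto
    have "\<forall>w\<in>set \<gamma>. b \<le> Omega r N e jj w \<and> Omega r N e jj w \<le> b + 1"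
    proof
      fix w assume "w \<in> set \<gamma>"
      then obtain u where u: "u \<in> set \<alpha>" "w = ext ?q u (w ?q)" using vert_form a(3) by blast
      have c: "r + jj - 1 < ?q" "r \<le> ?q" using jj by auto
      have "Omega r N e jj w = Omega r N e jj u" using u(2) Omega_ext[OF c, of u "w ?q"] by simp
      thus "b \<le> Omega r N e jj w \<and> Omega r N e jj w \<le> b + 1" using b u by simp
    qed
    thus "\<exists>a. \<forall>w\<in>set \<gamma>. a \<le> Omega r N e jj w \<and> Omega r N e jj w \<le> a + 1" by blast
  qed
qed

end

lemma Omega_comb: assumes "sum c S = 1"
  shows "Omega r N e jj (comb c S) = (\<Sum>w\<in>S. c w * Omega r N e jj w)"
proof -
  have "omega_fn r N e jj (comb c S) = (\<Sum>w\<in>S. c w * omega_fn r N e jj w)"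
    by (rule lin_om_comb[OF omega_lin[of r r]]) simp
  thus ?thesis unfolding Omega_alt comb_def by (simp add: distrib_left sum.distrib)
qed


theorem proposition2:
  fixes r1 r2 :: nat and N :: "nat \<Rightarrow> nat" and e :: "nat \<Rightarrow> nat \<Rightarrow> complex"
  assumes deg: "r1 + r2 \<ge> 1"
    and N3: "\<forall>j\<in>{1..r2}. N j \<ge> 3"
    and e_nz: "\<forall>l\<in>{1..r1 + r2 - 1}. \<forall>j\<in>{1..r2}. e l j \<noteq> 0"
  shows "Lambda_complex (r1 + 2 * r2 - 1) (LamK (r1 + r2 - 1) r2 N) (Xfrak r1 r2 N e)
       \<and> (\<forall>\<alpha>\<in>set (Xfrak r1 r2 N e). \<forall>v\<in>set \<alpha>. \<forall>i. v i \<in> \<int>)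
       \<and> length (Xfrak r1 r2 N e) = fact (r1 + 2 * r2 - 1) * (\<Prod>j=1..r2. N j)
       \<and> (\<forall>j\<in>{1..r2}. \<forall>\<alpha>\<in>set (Xfrak r1 r2 N e). \<exists>a::real.
            \<forall>\<kappa>\<in>chull (set \<alpha>). a \<le> Omega (r1 + r2 - 1) N e j \<kappa> \<and> Omega (r1 + r2 - 1) N e j \<kappa> \<le> a + 1)"
proof -
  define r where "r = r1 + r2 - 1"
  have nr: "r1 + 2 * r2 - 1 = r + r2" using deg unfolding r_def by simp
  have XF: "Xfrak r1 r2 N e = Xc r N e (r + r2)" unfolding Xfrak_def r_def nr[unfolded r_def] ..
  have P1: "Lambda_complex (r + r2) (LamK r r2 N) (Xc r N e (r + r2))"
    using LC_all[of "r + r2" r r2 N e] N3 unfolding Lat_LamK by simp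
  have P2: "\<forall>\<alpha>\<in>set (Xc r N e (r + r2)). \<forall>v\<in>set \<alpha>. \<forall>i. v i \<in> \<int>"
    by (rule Int_all[OF N3]) simp
  have P3: "length (Xc r N e (r + r2)) = fact (r + r2) * (\<Prod>j=1..r2. N j)"
  proof -
    have "length (Xc r N e (r + r2)) = fact (r + r2) * (\<Prod>k\<in>{1..r + r2 - r}. N k)"
      by (rule len_all[OF N3]) simp
    thus ?thesis by simp
  qed
  have P4: "\<forall>j\<in>{1..r2}. \<forall>\<alpha>\<in>set (Xc r N e (r + r2)). \<exists>a::real.
            \<forall>\<kappa>\<in>chull (set \<alpha>). a \<le> Omega r N e j \<kappa> \<and> Omega r N e j \<kappa> \<le> a + 1"
  proof (intro ballI)
    fix j \<alpha> assume j: "j \<in> {1..r2}" and a: "\<alpha> \<in> set (Xc r N e (r + r2))"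
    have rr: "r + j + (r2 - j) = r + r2" using j by simp
    have "\<forall>\<gamma>\<in>set (Xc r N e (r + j + (r2 - j))). \<exists>a. \<forall>w\<in>set \<gamma>. a \<le> Omega r N e j w \<and> Omega r N e j w \<le> a + 1"
      by (rule Om_all[OF N3 j]) (use rr in simp)
    then obtain b where b: "\<forall>w\<in>set \<alpha>. b \<le> Omega r N e j w \<and> Omega r N e j w \<le> b + 1"
      using a rr by auto
    have "\<forall>\<kappa>\<in>chull (set \<alpha>). b \<le> Omega r N e j \<kappa> \<and> Omega r N e j \<kappa> \<le> b + 1"
    proof
      fix \<kappa> assume "\<kappa> \<in> chull (set \<alpha>)"
      then obtain c where c0: "\<forall>w\<in>set \<alpha>. 0 \<le> c w" and c1: "sum c (set \<alpha>) = 1" and k: "\<kappa> = comb c (set \<alpha>)"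
        unfolding chull_def by blast
      have O: "Omega r N e j \<kappa> = (\<Sum>w\<in>set \<alpha>. c w * Omega r N e j w)" unfolding k by (rule Omega_comb[OF c1])
      have "(\<Sum>w\<in>set \<alpha>. c w * b) \<le> (\<Sum>w\<in>set \<alpha>. c w * Omega r N e j w)"
        by (rule sum_mono) (use c0 b in \<open>simp add: mult_left_mono\<close>)
      moreover have "(\<Sum>w\<in>set \<alpha>. c w * Omega r N e j w) \<le> (\<Sum>w\<in>set \<alpha>. c w * (b + 1))"
        by (rule sum_mono) (use c0 b in \<open>simp add: mult_left_mono\<close>)
      moreover have "(\<Sum>w\<in>set \<alpha>. c w * b) = b" "(\<Sum>w\<in>set \<alpha>. c w * (b + 1)) = b + 1"
        using c1 by (simp_all add: sum_distrib_right[symmetric])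
      ultimately show "b \<le> Omega r N e j \<kappa> \<and> Omega r N e j \<kappa> \<le> b + 1" using O by simp
    qed
    thus "\<exists>a::real. \<forall>\<kappa>\<in>chull (set \<alpha>). a \<le> Omega r N e j \<kappa> \<and> Omega r N e j \<kappa> \<le> a + 1" by blast
  qed
  show ?thesis unfolding r_def[symmetric] nr XF using P1 P2 P3 P4 by simp
qed


end
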